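(* Let $K,T\subset\mathbb{R}^2$ be convex bodies, where $T$ is strictly convex and smooth. Then every $\ell_T$-minimizing closed $(K,T)$-Minkowski billiard trajectory $q=(q_1,\dots,q_m)$ satisfies $m\in\{2,3\}$, and if $m=3$ all bouncing points $q_1,q_2,q_3$ are smooth boundary points of $K$. Moreover, if $q$ fulfills the Minkowski billiard reflection rule with respect to $K$-supporting lines $H_1,\dots,H_m$, then: (i) the convex cone $U$ spanned by the unit vectors $n_K(q_1),\dots,n_K(q_m)$ normal to $H_1,\dots,H_m$ is a linear subspace of $\mathbb{R}^2$ with $\dim U=m-1$; (ii) if $V\subseteq\mathbb{R}^2$ is an affine subspace such that $K\cap V$ is the inclusion-minimal affine section of $K$ containing $q$, then $\dim V=m-1$.
   Context: A convex body is a compact convex set containing the origin in its interior; it is smooth if through each boundary point there is a unique supporting hyperplane; a boundary point is smooth if there is a unique supporting hyperplane through it. For a convex body $T$, $T^\circ$ is its polar body and $\mu_{T^\circ}(x)=\min\{t\ge 0: x\in tT^\circ\}$. For a convex set $C$ and $z\in\partial C$, $N_C(z)=\{v:\langle v,y-z\rangle\le 0\ \forall y\in C\}$. A closed polygonal curve $(q_1,\dots,q_m)$, $m\ge2$, always satisfies $q_j\ne q_{j+1}$ and $q_j\notin[q_{j-1},q_{j+1}]$ (indices mod $m$); $\ell_T(q)=\sum_j\mu_{T^\circ}(q_{j+1}-q_j)$. A closed polygonal curve $q$ with vertices on $\partial K$ is a closed $(K,T)$-Minkowski billiard trajectory if there are $p_1,\dots,p_m\in\partial T$ with $q_{j+1}-q_j\in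 N_T(p_j)$ and $p_{j+1}-p_j\in -N_K(q_{j+1})$ for all $j$; it fulfills the reflection rule with respect to the $K$-supporting lines $H_j$ through $q_j$ if there are outer unit normals $n_K(q_j)\in N_K(q_j)$ normal to $H_j$ and $\mu_j\ge0$ with $p_{j+1}-p_j=-\mu_{j+1}n_K(q_{j+1})$ for all $j$. It is $\ell_T$-minimizing if its $\ell_T$-length is minimal among all closed $(K,T)$-Minkowski billiard trajectories. *)

theory Defs
  imports "HOL-Analysis.Analysis"
begin

type_synonym pt = "real^2"

definition convex_body :: "pt set \<Rightarrow> bool" where
  "convex_body C \<longleftrightarrow> compact C \<and> convex C \<and> 0 \<in> interior C"

definition supporting_hyperplane :: "pt set \<Rightarrow> pt \<Rightarrow> pt set \<Rightarrow> bool" where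
  "supporting_hyperplane C z H \<longleftrightarrow>
     (\<exists>a b. a \<noteq> 0 \<and> H = {x. a \<bullet> x = b} \<and> z \<in> H \<and> (\<forall>x\<in>C. a \<bullet> x \<le> b))"

definition smooth_point :: "pt set \<Rightarrow> pt \<Rightarrow> bool" where
  "smooth_point C z \<longleftrightarrow> z \<in> frontier C \<and> (\<exists>!H. supporting_hyperplane C z H)"

definition smooth_body :: "pt set \<Rightarrow> bool" where
  "smooth_body C \<longleftrightarrow> (\<forall>z\<in>frontier C. \<exists>!H. supporting_hyperplane C z H)"

definition strictly_convex :: "pt set \<Rightarrow> bool" where
  "strictly_convex C \<longleftrightarrow> (\<forall>x\<in>C. \<forall>y\<in>C. x \<noteq> y \<longrightarrow> open_segment x y \<subseteq> interior C)"

definition polar :: "pt set \<Rightarrow> pt set" where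
  "polar C = {y. \<forall>x\<in>C. x \<bullet> y \<le> 1}"

definition mu_polar :: "pt set \<Rightarrow> pt \<Rightarrow> real" where
  "mu_polar T x = Inf {t. t \<ge> 0 \<and> x \<in> (\<lambda>y. t *\<^sub>R y) ` polar T}"

definition normal_cone :: "pt set \<Rightarrow> pt \<Rightarrow> pt set" where
  "normal_cone C z = {v. \<forall>y\<in>C. v \<bullet> (y - z) \<le> 0}"

text \<open>indices 0..m-1 taken mod m (paper: 1..m)\<close>
definition nxt :: "nat \<Rightarrow> nat \<Rightarrow> nat" where
  "nxt m j = Suc j mod m"

definition prv :: "nat \<Rightarrow> nat \<Rightarrow> nat" where
  "prv m j = (j + m - 1) mod m"

definition closed_polygon :: "pt list \<Rightarrow> bool" where
  "closed_polygon q \<longleftrightarrow> length q \<ge> 2 \<and>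
     (\<forall>j<length q. q ! j \<noteq> q ! nxt (length q) j \<and>
        q ! j \<notin> closed_segment (q ! prv (length q) j) (q ! nxt (length q) j))"

definition ellT :: "pt set \<Rightarrow> pt list \<Rightarrow> real" where
  "ellT T q = (\<Sum>j<length q. mu_polar T (q ! nxt (length q) j - q ! j))"

definition billiard_traj_with :: "pt set \<Rightarrow> pt set \<Rightarrow> pt list \<Rightarrow> (nat \<Rightarrow> pt) \<Rightarrow> bool" where
  "billiard_traj_with K T q p \<longleftrightarrow> closed_polygon q \<and> set q \<subseteq> frontier K \<and>
     (\<forall>j<length q. p j \<in> frontier T \<and>
        q ! nxt (length q) j - q ! j \<in> normal_cone T (p j) \<and>
        p (nxt (length q) j) - p j \<in> uminus ` normal_cone K (q ! nxt (length q) j))"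

definition billiard_traj :: "pt set \<Rightarrow> pt set \<Rightarrow> pt list \<Rightarrow> bool" where
  "billiard_traj K T q \<longleftrightarrow> (\<exists>p. billiard_traj_with K T q p)"

definition minimizing_traj :: "pt set \<Rightarrow> pt set \<Rightarrow> pt list \<Rightarrow> bool" where
  "minimizing_traj K T q \<longleftrightarrow> billiard_traj K T q \<and>
     (\<forall>q'. billiard_traj K T q' \<longrightarrow> ellT T q \<le> ellT T q')"

definition reflection_rule ::
  "pt set \<Rightarrow> pt list \<Rightarrow> (nat \<Rightarrow> pt) \<Rightarrow> (nat \<Rightarrow> pt set) \<Rightarrow> (nat \<Rightarrow> pt) \<Rightarrow> (nat \<Rightarrow> real) \<Rightarrow> bool" where
  "reflection_rule K q p H n mu \<longleftrightarrow>
     (\<forall>j<length q. supporting_hyperplane K (q ! j) (H j) \<and>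
        norm (n j) = 1 \<and> n j \<in> normal_cone K (q ! j) \<and>
        (\<forall>x\<in>H j. n j \<bullet> (x - q ! j) = 0) \<and> mu j \<ge> 0 \<and>
        p (nxt (length q) j) - p j = - (mu (nxt (length q) j) *\<^sub>R n (nxt (length q) j)))"

definition minimal_affine_section :: "pt set \<Rightarrow> pt list \<Rightarrow> pt set \<Rightarrow> bool" where
  "minimal_affine_section K q V \<longleftrightarrow> affine V \<and> set q \<subseteq> K \<inter> V \<and>
     (\<forall>W. affine W \<and> set q \<subseteq> K \<inter> W \<longrightarrow> K \<inter> V \<subseteq> K \<inter> W)"

end

theory Submission
  imports Defs
begin


definition sf :: "pt set \<Rightarrow> pt \<Rightarrow> real" where
  "sf C v = Sup ((\<lambda>x. v \<bullet> x) ` C)"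

lemma sf_ge:
  assumes "compact C" "x \<in> C" shows "v \<bullet> x \<le> sf C v"
proof -
  have "bounded ((\<lambda>x. v \<bullet> x) ` C)"
    using assms(1) by (intro compact_imp_bounded compact_continuous_image continuous_intros)
  then have "bdd_above ((\<lambda>x. v \<bullet> x) ` C)" by (rule bounded_imp_bdd_above)
  then show ?thesis unfolding sf_def using assms(2) by (auto intro: cSup_upper)
qed

lemma sf_eqI:
  assumes "compact C" "x \<in> C" "\<And>y. y \<in> C \<Longrightarrow> v \<bullet> y \<le> v \<bullet> x"
  shows "sf C v = v \<bullet> x"
proof -
  have "sf C v \<le> v \<bullet> x" unfolding sf_def using assms(2,3) by (auto intro!: cSup_least)
  with sf_ge[OF assms(1,2), of v] show ?thesis by linarith
qed

lemma sf_attained: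
  assumes "compact C" "C \<noteq> {}" shows "\<exists>x\<in>C. sf C v = v \<bullet> x"
proof -
  have "continuous_on C (\<lambda>x. v \<bullet> x)" by (intro continuous_intros)
  then obtain x where "x \<in> C" "\<And>y. y \<in> C \<Longrightarrow> v \<bullet> y \<le> v \<bullet> x"
    using continuous_attains_sup[OF assms, of "\<lambda>x. v \<bullet> x"] by blast
  then show ?thesis using sf_eqI[OF assms(1)] by blast
qed

lemma normal_coneI_sf:
  assumes "compact C" "x \<in> C" "sf C v = v \<bullet> x" shows "v \<in> normal_cone C x"
proof -
  have "v \<bullet> y \<le> v \<bullet> x" if "y \<in> C" for y using sf_ge[OF assms(1) that, of v] assms(3) by simp
  then show ?thesis unfolding normal_cone_def by (auto simp: inner_diff_right)
qed

lemma sf_normal: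
  assumes "compact C" "x \<in> C" "v \<in> normal_cone C x" shows "sf C v = v \<bullet> x"
  using assms by (intro sf_eqI) (auto simp: normal_cone_def inner_diff_right)

lemma normal_cone_iff_sf:
  assumes "compact C" "x \<in> C" shows "v \<in> normal_cone C x \<longleftrightarrow> sf C v = v \<bullet> x"
  using sf_normal normal_coneI_sf assms by blast

lemma sf_scale:
  assumes "compact C" "C \<noteq> {}" "c \<ge> 0" shows "sf C (c *\<^sub>R v) = c * sf C v"
proof -
  obtain x where x: "x \<in> C" "sf C v = v \<bullet> x" using sf_attained[OF assms(1,2)] by blast
  have "(c *\<^sub>R v) \<bullet> y \<le> (c *\<^sub>R v) \<bullet> x" if "y \<in> C" for y
    using sf_ge[OF assms(1) that, of v] x assms(3) by (auto intro: mult_left_mono)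
  then have "sf C (c *\<^sub>R v) = (c *\<^sub>R v) \<bullet> x" using sf_eqI[OF assms(1) x(1)] by blast
  then show ?thesis using x by simp
qed

lemma sf_zero: assumes "compact C" "C \<noteq> {}" shows "sf C 0 = 0"
  using sf_scale[OF assms, of 0 0] by simp

lemma sf_add:
  assumes "compact C" "C \<noteq> {}" shows "sf C (u + v) \<le> sf C u + sf C v"
proof -
  obtain x where x: "x \<in> C" "sf C (u + v) = (u + v) \<bullet> x" using sf_attained[OF assms] by blast
  then show ?thesis using sf_ge[OF assms(1) x(1), of u] sf_ge[OF assms(1) x(1), of v]
    by (simp add: inner_add_left)
qed

lemma sf_sum:
  assumes "compact C" "C \<noteq> {}" "finite J" shows "sf C (\<Sum>j\<in>J. f j) \<le> (\<Sum>j\<in>J. sf C (f j))"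
  using assms(3)
proof (induction J)
  case empty then show ?case using sf_zero[OF assms(1,2)] by simp
next
  case (insert j J)
  then show ?case using sf_add[OF assms(1,2), of "f j" "sum f J"] by simp
qed

lemma sf_lipschitz:
  assumes "compact C" "C \<noteq> {}" "C \<subseteq> cball 0 R"
  shows "sf C u - sf C v \<le> R * norm (u - v)"
proof -
  obtain x where x: "x \<in> C" "sf C u = u \<bullet> x" using sf_attained[OF assms(1,2)] by blast
  have e1: "u \<bullet> x = v \<bullet> x + (u - v) \<bullet> x" by (simp add: inner_diff_left)
  have e2: "(u - v) \<bullet> x \<le> norm (u - v) * norm x" using norm_cauchy_schwarz by blast
  have e3: "norm x \<le> R" using assms(3) x(1) by auto
  have e4: "norm (u - v) * norm x \<le> norm (u - v) * R" using e3 by (intro mult_left_mono) auto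
  show ?thesis using sf_ge[OF assms(1) x(1), of v] x(2) e1 e2 e4 by (simp add: mult.commute)
qed

lemma sf_continuous:
  assumes "compact C" "C \<noteq> {}" shows "continuous_on UNIV (sf C)"
proof -
  obtain R where R0: "R > 0" and Rb: "\<forall>x\<in>C. norm x \<le> R"
    using compact_imp_bounded[OF assms(1)] unfolding bounded_pos by blast
  have R: "C \<subseteq> cball 0 R" using Rb by (auto simp: subset_iff)
  have lip: "dist (sf C u) (sf C v) \<le> R * dist u v" for u v
  proof -
    have "sf C u - sf C v \<le> R * norm (u - v)" by (rule sf_lipschitz[OF assms R])
    moreover have "sf C v - sf C u \<le> R * norm (v - u)" by (rule sf_lipschitz[OF assms R])
    moreover have "norm (v - u) = norm (u - v)" by (rule norm_minus_commute)
    ultimately show ?thesis by (simp add: dist_norm dist_real_def abs_le_iff)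
  qed
  have "R-lipschitz_on UNIV (sf C)" by (rule lipschitz_onI) (use lip R0 in auto)
  then show ?thesis by (rule lipschitz_on_continuous_on)
qed



lemma cb_compact: "convex_body C \<Longrightarrow> compact C" by (simp add: convex_body_def)
lemma cb_convex: "convex_body C \<Longrightarrow> convex C" by (simp add: convex_body_def)
lemma cb_int: "convex_body C \<Longrightarrow> 0 \<in> interior C" by (simp add: convex_body_def)
lemma cb_zero: "convex_body C \<Longrightarrow> 0 \<in> C" using cb_int interior_subset by blast
lemma cb_ne: "convex_body C \<Longrightarrow> C \<noteq> {}" using cb_zero by blast
lemma cb_closed: "convex_body C \<Longrightarrow> closed C" using cb_compact compact_imp_closed by blast
lemma cb_frontier: "convex_body C \<Longrightarrow> x \<in> frontier C \<Longrightarrow> x \<in> C"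
  using cb_closed frontier_subset_closed by blast

lemma cb_ball: assumes "convex_body C" obtains e where "e > 0" "cball 0 e \<subseteq> C"
proof -
  obtain e where "e > 0" "ball 0 e \<subseteq> C" using cb_int[OF assms] mem_interior by blast
  then have "cball 0 (e/2) \<subseteq> C" "e/2 > 0" by (auto simp: subset_iff)
  then show ?thesis using that by blast
qed

lemma cb_scaled_in:
  assumes "convex_body C" obtains e where "e > 0" "\<And>v. v \<noteq> 0 \<Longrightarrow> (e / norm v) *\<^sub>R v \<in> C"
proof -
  obtain e where e: "e > 0" "cball 0 e \<subseteq> C" using cb_ball[OF assms] by blast
  have "(e / norm v) *\<^sub>R v \<in> C" if "v \<noteq> 0" for v
    using e that by (intro subsetD[OF e(2)]) auto
  then show ?thesis using that e(1) by blast
qed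

lemma sf_pos:
  assumes "convex_body C" "v \<noteq> 0" shows "sf C v > 0"
proof -
  obtain e where e: "e > 0" "\<And>v. v \<noteq> 0 \<Longrightarrow> (e / norm v) *\<^sub>R v \<in> C" using cb_scaled_in[OF assms(1)] by blast
  have "v \<bullet> ((e / norm v) *\<^sub>R v) = e * norm v"
    using assms(2) by (simp add: power2_norm_eq_inner[symmetric] power2_eq_square)
  moreover have "e * norm v > 0" using e assms(2) by simp
  ultimately show ?thesis using sf_ge[OF cb_compact[OF assms(1)] e(2)[OF assms(2)], of v] by linarith
qed

lemma mu_polar_sf:
  assumes "convex_body T" shows "mu_polar T v = sf T v"
proof -
  have cT: "compact T" and neT: "T \<noteq> {}" using assms cb_compact cb_ne by auto
  have z: "(0::pt) \<in> polar T" by (simp add: polar_def)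
  show ?thesis
  proof (cases "v = 0")
    case True
    have "0 \<in> {t. t \<ge> 0 \<and> v \<in> (\<lambda>y. t *\<^sub>R y) ` polar T}" using z True by force
    then have "Inf {t. t \<ge> 0 \<and> v \<in> (\<lambda>y. t *\<^sub>R y) ` polar T} = 0"
      by (intro cInf_eq_minimum) auto
    then show ?thesis using True sf_zero[OF cT neT] by (simp add: mu_polar_def)
  next
    case False
    have spos: "sf T v > 0" using sf_pos[OF assms False] .
    have "{t. t \<ge> 0 \<and> v \<in> (\<lambda>y. t *\<^sub>R y) ` polar T} = {sf T v..}"
    proof (intro set_eqI iffI)
      fix t assume "t \<in> {t. t \<ge> 0 \<and> v \<in> (\<lambda>y. t *\<^sub>R y) ` polar T}"
      then obtain y where t: "t \<ge> 0" "y \<in> polar T" "v = t *\<^sub>R y" by auto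
      have "t \<noteq> 0" using t False by auto
      obtain x where x: "x \<in> T" "sf T v = v \<bullet> x" using sf_attained[OF cT neT] by blast
      have "v \<bullet> x = t * (x \<bullet> y)" using t(3) by (simp add: inner_commute)
      also have "\<dots> \<le> t * 1" using t(1,2) x(1) unfolding polar_def by (intro mult_left_mono) auto
      finally show "t \<in> {sf T v..}" using x by simp
    next
      fix t assume "t \<in> {sf T v..}"
      then have t: "t \<ge> sf T v" by simp
      then have tp: "t > 0" using spos by linarith
      have "(1/t) *\<^sub>R v \<in> polar T"
        unfolding polar_def
      proof (intro CollectI ballI)
        fix x assume "x \<in> T"
        then have "v \<bullet> x \<le> t" using sf_ge[OF cT, of x v] t by linarith
        then show "x \<bullet> (1/t) *\<^sub>R v \<le> 1" using tp by (simp add: inner_commute field_simps)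
      qed
      moreover have "v = t *\<^sub>R ((1/t) *\<^sub>R v)" using tp by simp
      ultimately show "t \<in> {t. t \<ge> 0 \<and> v \<in> (\<lambda>y. t *\<^sub>R y) ` polar T}" using tp by force
    qed
    then show ?thesis by (simp add: mu_polar_def)
  qed
qed

lemma max_frontier:
  assumes "compact C" "x \<in> C" "v \<noteq> 0" "sf C v = v \<bullet> x" shows "x \<in> frontier C"
proof -
  have "x \<notin> interior C"
  proof
    assume "x \<in> interior C"
    then obtain e where e: "e > 0" "ball x e \<subseteq> C" using mem_interior by blast
    let ?y = "x + (e / 2 / norm v) *\<^sub>R v"
    have "dist x ?y < e" using e assms(3) by (simp add: dist_norm)
    then have "?y \<in> C" using e by auto
    moreover have "v \<bullet> ?y = v \<bullet> x + e/2 * norm v"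
      using assms(3) by (simp add: inner_add_right power2_norm_eq_inner[symmetric] power2_eq_square)
    moreover have "e/2 * norm v > 0" using e assms(3) by simp
    ultimately show False using sf_ge[OF assms(1), of ?y v] assms(4) by linarith
  qed
  then show ?thesis using assms(2) closure_subset unfolding frontier_def by blast
qed

lemma unique_max:
  assumes "strictly_convex C" "compact C" "x \<in> C" "y \<in> C" "v \<noteq> 0"
    "sf C v = v \<bullet> x" "sf C v = v \<bullet> y"
  shows "x = y"
proof (rule ccontr)
  assume xy: "x \<noteq> y"
  let ?m = "midpoint x y"
  have "?m \<in> interior C" using assms(1,3,4) xy midpoint_in_open_segment[of x y]
    unfolding strictly_convex_def by blast
  moreover have "?m \<in> C" using interior_subset calculation by blast
  moreover have "v \<bullet> ?m = sf C v" using assms(6,7)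
    by (simp add: midpoint_def inner_add_right)
  ultimately show False using max_frontier[OF assms(2) _ assms(5)] by (simp add: frontier_def)
qed

lemma pointed:
  assumes "convex_body K" "x \<in> K" "n \<in> normal_cone K x" "n \<noteq> 0" shows "n \<bullet> x > 0"
proof -
  obtain e where e: "e > 0" "\<And>v. v \<noteq> 0 \<Longrightarrow> (e / norm v) *\<^sub>R v \<in> K" using cb_scaled_in[OF assms(1)] by blast
  have "n \<bullet> ((e / norm n) *\<^sub>R n - x) \<le> 0" using assms(3) e(2)[OF assms(4)] unfolding normal_cone_def by blast
  moreover have "n \<bullet> ((e / norm n) *\<^sub>R n) = e * norm n"
    using assms(4) by (simp add: power2_norm_eq_inner[symmetric] power2_eq_square)
  moreover have "e * norm n > 0" using e assms(4) by simp
  ultimately show ?thesis by (simp add: inner_diff_right)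
qed

lemma normal_cone_add: "u \<in> normal_cone C x \<Longrightarrow> v \<in> normal_cone C x \<Longrightarrow> u + v \<in> normal_cone C x"
  unfolding normal_cone_def by (auto simp: inner_add_left intro: add_nonpos_nonpos)

lemma normal_cone_scale: "u \<in> normal_cone C x \<Longrightarrow> c \<ge> 0 \<Longrightarrow> c *\<^sub>R u \<in> normal_cone C x"
  unfolding normal_cone_def by (auto simp: mult_nonneg_nonpos)

lemma normal_cone_zero: "0 \<in> normal_cone C x"
  unfolding normal_cone_def by auto

lemma smooth_parallel:
  assumes "convex_body T" "smooth_body T" "p \<in> frontier T"
    "u \<in> normal_cone T p" "w \<in> normal_cone T p" "u \<noteq> 0" "w \<noteq> 0"
  shows "\<exists>c>0. w = c *\<^sub>R u"
proof -
  have sh: "supporting_hyperplane T p {x. a \<bullet> x = a \<bullet> p}" if "a \<in> normal_cone T p" "a \<noteq> 0" for a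
    unfolding supporting_hyperplane_def using that
    by (intro exI[of _ a] exI[of _ "a \<bullet> p"]) (auto simp: normal_cone_def inner_diff_right)
  have "\<exists>!H. supporting_hyperplane T p H" using assms(2,3) unfolding smooth_body_def by blast
  then have H: "{x. u \<bullet> x = u \<bullet> p} = {x. w \<bullet> x = w \<bullet> p}" using sh[OF assms(4,6)] sh[OF assms(5,7)] by blast
  define c where "c = (w \<bullet> u) / (u \<bullet> u)"
  define z where "z = w - c *\<^sub>R u"
  have uu: "u \<bullet> u > 0" using assms(6) by simp
  have zu: "z \<bullet> u = 0" unfolding z_def c_def using uu by (simp add: inner_diff_left)
  have "p + z \<in> {x. u \<bullet> x = u \<bullet> p}" using zu by (simp add: inner_add_right inner_commute)
  then have "w \<bullet> (p + z) = w \<bullet> p" using H by blast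
  then have wz: "w \<bullet> z = 0" by (simp add: inner_add_right)
  have "z \<bullet> z = w \<bullet> z - c * (u \<bullet> z)" unfolding z_def by (simp add: inner_diff_left inner_commute)
  then have "z \<bullet> z = 0" using wz zu by (simp add: inner_commute)
  then have weq: "w = c *\<^sub>R u" unfolding z_def by simp
  have "c > 0"
  proof (rule ccontr)
    assume "\<not> c > 0"
    moreover have "c \<noteq> 0" using weq assms(7) by auto
    ultimately have cn: "c < 0" by linarith
    obtain e where e: "e > 0" "\<And>v. v \<noteq> 0 \<Longrightarrow> (e / norm v) *\<^sub>R v \<in> T" using cb_scaled_in[OF assms(1)] by blast
    let ?y1 = "(e / norm u) *\<^sub>R u" and ?y2 = "(e / norm (-u)) *\<^sub>R (-u)"
    have y1: "?y1 \<in> T" using e(2)[of u] assms(6) by blast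
    have y2: "?y2 \<in> T" using e(2)[of "-u"] assms(6) by simp
    have a1: "u \<bullet> (?y1 - p) \<le> 0" using assms(4) y1 unfolding normal_cone_def by blast
    have "w \<bullet> (?y2 - p) \<le> 0" using assms(5) y2 unfolding normal_cone_def by blast
    then have "c * (u \<bullet> (?y2 - p)) \<le> 0" using weq by simp
    then have a2: "u \<bullet> (?y2 - p) \<ge> 0" using cn by (simp add: mult_le_0_iff)
    have "u \<bullet> ?y1 = e * norm u" "u \<bullet> ?y2 = - (e * norm u)"
      using assms(6) by (simp_all add: power2_norm_eq_inner[symmetric] power2_eq_square)
    moreover have "e * norm u > 0" using e(1) assms(6) by simp
    ultimately show False using a1 a2 by (simp add: inner_diff_right)
  qed
  then show ?thesis using weq by blast
qed



definition Phi :: "pt set \<Rightarrow> pt \<Rightarrow> pt \<Rightarrow> pt \<Rightarrow> real" where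
  "Phi T a b c = sf T (b - a) + sf T (c - b) + sf T (a - c)"

definition Psi :: "pt set \<Rightarrow> pt \<Rightarrow> pt \<Rightarrow> pt \<Rightarrow> real" where
  "Psi K x y z = sf K (z - x) + sf K (x - y) + sf K (y - z)"

definition Bf :: "pt \<Rightarrow> pt \<Rightarrow> pt \<Rightarrow> pt \<Rightarrow> pt \<Rightarrow> pt \<Rightarrow> real" where
  "Bf a b c x y z = (b - a) \<bullet> x + (c - b) \<bullet> y + (a - c) \<bullet> z"

definition F3 :: "pt set \<Rightarrow> pt \<Rightarrow> pt \<Rightarrow> pt \<Rightarrow> bool" where
  "F3 C a b c \<longleftrightarrow> a \<in> C \<and> b \<in> C \<and> c \<in> C \<and>
    (\<exists>na nb nc. na \<in> normal_cone C a \<and> nb \<in> normal_cone C b \<and> nc \<in> normal_cone C c \<and>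
       na + nb + nc = 0 \<and> (na \<noteq> 0 \<or> nb \<noteq> 0 \<or> nc \<noteq> 0))"

lemma Bf_alt: "Bf a b c x y z = a \<bullet> (z - x) + b \<bullet> (x - y) + c \<bullet> (y - z)"
  unfolding Bf_def by (simp add: inner_diff_left inner_diff_right inner_commute)

lemma Bf_le_Phi:
  assumes "compact T" "x \<in> T" "y \<in> T" "z \<in> T" shows "Bf a b c x y z \<le> Phi T a b c"
  unfolding Bf_def Phi_def
  using sf_ge[OF assms(1,2), of "b - a"] sf_ge[OF assms(1,3), of "c - b"] sf_ge[OF assms(1,4), of "a - c"]
  by linarith

lemma Bf_le_Psi:
  assumes "compact K" "a \<in> K" "b \<in> K" "c \<in> K" shows "Bf a b c x y z \<le> Psi K x y z"
  unfolding Bf_alt Psi_def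
  using sf_ge[OF assms(1,2), of "z - x"] sf_ge[OF assms(1,3), of "x - y"] sf_ge[OF assms(1,4), of "y - z"]
  by (simp add: inner_commute)

lemma small_le_zero:
  fixes P Q :: real
  assumes "\<And>e. 0 < e \<Longrightarrow> e \<le> 1 \<Longrightarrow> P \<le> e * Q" shows "P \<le> 0"
proof (rule ccontr)
  assume "\<not> P \<le> 0"
  then have P: "P > 0" by simp
  define e where "e = min 1 (P / (2 * (\<bar>Q\<bar> + 1)))"
  have e: "0 < e" "e \<le> 1" using P unfolding e_def by auto
  have "e * Q \<le> e * (\<bar>Q\<bar> + 1)" using e by (intro mult_left_mono) auto
  also have "\<dots> \<le> P / (2 * (\<bar>Q\<bar> + 1)) * (\<bar>Q\<bar> + 1)"
    by (intro mult_right_mono) (auto simp: e_def)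
  also have "\<dots> = P / 2" by (simp add: field_simps)
  finally show False using assms[OF e] P by linarith
qed

lemma shrink_int:
  assumes "convex_body C" "y \<in> C" "0 < e" "e \<le> 1" shows "(1 - e) *\<^sub>R y \<in> interior C"
proof -
  have "y - e *\<^sub>R (y - 0) \<in> interior C"
    using mem_interior_convex_shrink[OF cb_convex[OF assms(1)] cb_int[OF assms(1)] assms(2-4)] .
  then show ?thesis by (simp add: algebra_simps)
qed

lemma sep3:
  assumes C: "convex_body C" and x: "x0 \<in> C" "x1 \<in> C" "x2 \<in> C"
    and nt: "\<not> (\<exists>t. x0 + t \<in> interior C \<and> x1 + t \<in> interior C \<and> x2 + t \<in> interior C)"
  shows "F3 C x0 x1 x2"
proof -
  define A where "A = ((\<lambda>y. y - x0) ` interior C) \<times> ((\<lambda>y. y - x1) ` interior C) \<times> ((\<lambda>y. y - x2) ` interior C)"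
  define D where "D = range (\<lambda>t::pt. (t, t, t))"
  have cvi: "convex (interior C)" using cb_convex[OF C] convex_interior by blast
  have cA: "convex A" unfolding A_def using cvi
    by (intro convex_Times convex_translation_subtract) auto
  have cD: "convex D" unfolding D_def
  proof (rule convexI)
    fix p q :: "pt \<times> pt \<times> pt" and u v :: real
    assume "p \<in> range (\<lambda>t. (t, t, t))" "q \<in> range (\<lambda>t. (t, t, t))"
    then obtain s t where "p = (s, s, s)" "q = (t, t, t)" by auto
    then have eq: "u *\<^sub>R p + v *\<^sub>R q = (\<lambda>t. (t, t, t)) (u *\<^sub>R s + v *\<^sub>R t)" by simp
    show "u *\<^sub>R p + v *\<^sub>R q \<in> range (\<lambda>t. (t, t, t))" unfolding eq by (rule rangeI)
  qed
  have "(0 - x0, 0 - x1, 0 - x2) \<in> A" unfolding A_def using cb_int[OF C] by auto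
  then have neA: "A \<noteq> {}" by auto
  have neD: "D \<noteq> {}" unfolding D_def by simp
  have disj: "A \<inter> D = {}"
  proof (rule ccontr)
    assume "A \<inter> D \<noteq> {}"
    then obtain t y0 y1 y2 where "y0 \<in> interior C" "y1 \<in> interior C" "y2 \<in> interior C"
      "t = y0 - x0" "t = y1 - x1" "t = y2 - x2"
      unfolding A_def D_def by auto
    note h = this
    have "x0 + t = y0" using h(4) by simp
    moreover have "x1 + t = y1" using h(5) by simp
    moreover have "x2 + t = y2" using h(6) by simp
    ultimately have "x0 + t \<in> interior C \<and> x1 + t \<in> interior C \<and> x2 + t \<in> interior C"
      using h(1-3) by simp
    then show False using nt by blast
  qed
  obtain a b where ab: "a \<noteq> 0" "\<forall>v\<in>A. a \<bullet> v \<le> b" "\<forall>v\<in>D. a \<bullet> v \<ge> b"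
    using separating_hyperplane_sets[OF cA cD neA neD disj] by blast
  obtain n0 n1 n2 where a: "a = (n0, n1, n2)" by (cases a) auto
  have Dt: "(n0 + n1 + n2) \<bullet> t \<ge> b" for t
    using ab(3) a unfolding D_def by (auto simp: inner_add_left add.assoc)
  have s0: "n0 + n1 + n2 = 0"
  proof (rule ccontr)
    let ?s = "n0 + n1 + n2"
    assume "?s \<noteq> 0"
    then have ss: "?s \<bullet> ?s > 0" by simp
    have "?s \<bullet> ((- (\<bar>b\<bar> + 1) / (?s \<bullet> ?s)) *\<^sub>R ?s) = - (\<bar>b\<bar> + 1)" using ss by simp
    then show False using Dt[of "(- (\<bar>b\<bar> + 1) / (?s \<bullet> ?s)) *\<^sub>R ?s"] by linarith
  qed
  have b0: "b \<le> 0" using Dt[of 0] by simp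
  have Ay: "n0 \<bullet> (y0 - x0) + n1 \<bullet> (y1 - x1) + n2 \<bullet> (y2 - x2) \<le> 0"
    if "y0 \<in> interior C" "y1 \<in> interior C" "y2 \<in> interior C" for y0 y1 y2
  proof -
    have "(y0 - x0, y1 - x1, y2 - x2) \<in> A" unfolding A_def using that by auto
    then show ?thesis using ab(2) a b0 by fastforce
  qed
  have shr: "(1 - e) *\<^sub>R w \<in> interior C" if "w \<in> C" "0 < e" "e \<le> 1" for w e
    using shrink_int[OF C that] .
  have N0: "n0 \<in> normal_cone C x0"
    unfolding normal_cone_def
  proof (intro CollectI ballI)
    fix y assume y: "y \<in> C"
    show "n0 \<bullet> (y - x0) \<le> 0"
    proof (rule small_le_zero)
      fix e :: real assume e: "0 < e" "e \<le> 1"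
      have "n0 \<bullet> ((1 - e) *\<^sub>R y - x0) + n1 \<bullet> ((1 - e) *\<^sub>R x1 - x1) + n2 \<bullet> ((1 - e) *\<^sub>R x2 - x2) \<le> 0"
        using Ay[OF shr[OF y e] shr[OF x(2) e] shr[OF x(3) e]] .
      then show "n0 \<bullet> (y - x0) \<le> e * (n0 \<bullet> y + n1 \<bullet> x1 + n2 \<bullet> x2)"
        by (simp add: algebra_simps inner_diff_right)
    qed
  qed
  have N1: "n1 \<in> normal_cone C x1"
    unfolding normal_cone_def
  proof (intro CollectI ballI)
    fix y assume y: "y \<in> C"
    show "n1 \<bullet> (y - x1) \<le> 0"
    proof (rule small_le_zero)
      fix e :: real assume e: "0 < e" "e \<le> 1"
      have "n0 \<bullet> ((1 - e) *\<^sub>R x0 - x0) + n1 \<bullet> ((1 - e) *\<^sub>R y - x1) + n2 \<bullet> ((1 - e) *\<^sub>R x2 - x2) \<le> 0"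
        using Ay[OF shr[OF x(1) e] shr[OF y e] shr[OF x(3) e]] .
      then show "n1 \<bullet> (y - x1) \<le> e * (n0 \<bullet> x0 + n1 \<bullet> y + n2 \<bullet> x2)"
        by (simp add: algebra_simps inner_diff_right)
    qed
  qed
  have N2: "n2 \<in> normal_cone C x2"
    unfolding normal_cone_def
  proof (intro CollectI ballI)
    fix y assume y: "y \<in> C"
    show "n2 \<bullet> (y - x2) \<le> 0"
    proof (rule small_le_zero)
      fix e :: real assume e: "0 < e" "e \<le> 1"
      have "n0 \<bullet> ((1 - e) *\<^sub>R x0 - x0) + n1 \<bullet> ((1 - e) *\<^sub>R x1 - x1) + n2 \<bullet> ((1 - e) *\<^sub>R y - x2) \<le> 0"
        using Ay[OF shr[OF x(1) e] shr[OF x(2) e] shr[OF y e]] .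
      then show "n2 \<bullet> (y - x2) \<le> e * (n0 \<bullet> x0 + n1 \<bullet> x1 + n2 \<bullet> y)"
        by (simp add: algebra_simps inner_diff_right)
    qed
  qed
  have "n0 \<noteq> 0 \<or> n1 \<noteq> 0 \<or> n2 \<noteq> 0" using ab(1) a by (auto simp: zero_prod_def)
  then show ?thesis unfolding F3_def using x N0 N1 N2 s0 by blast
qed



lemma compact_bound: assumes "compact C" obtains R where "R > 0" "\<And>x. x \<in> C \<Longrightarrow> norm x \<le> R"
  using compact_imp_bounded[OF assms] unfolding bounded_pos by blast

lemma gen3:
  assumes C: "convex_body C" and u: "u0 + u1 + u2 = 0" "u0 \<noteq> 0 \<or> u1 \<noteq> 0 \<or> u2 \<noteq> 0"
  shows "\<exists>c>0. \<exists>x0 x1 x2. x1 - x0 = c *\<^sub>R u0 \<and> x2 - x1 = c *\<^sub>R u1 \<and> x0 - x2 = c *\<^sub>R u2 \<and> F3 C x0 x1 x2"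
proof -
  have u2e: "u2 = - (u0 + u1)" using u(1) by (metis add.commute add_diff_cancel_left' diff_0 diff_add_eq_diff_diff_swap minus_diff_eq)
  define w1 where "w1 = u0"
  define w2 where "w2 = u0 + u1"
  define S where "S = {p :: real \<times> pt. 0 \<le> fst p} \<inter> snd -` C \<inter> (\<lambda>p. snd p + fst p *\<^sub>R w1) -` C
     \<inter> (\<lambda>p. snd p + fst p *\<^sub>R w2) -` C"
  have memS: "(c, s) \<in> S \<longleftrightarrow> 0 \<le> c \<and> s \<in> C \<and> s + c *\<^sub>R w1 \<in> C \<and> s + c *\<^sub>R w2 \<in> C" for c s
    unfolding S_def by auto
  have cC: "compact C" and clC: "closed C" using C cb_compact cb_closed by auto
  obtain R where R: "R > 0" "\<And>x. x \<in> C \<Longrightarrow> norm x \<le> R" using compact_bound[OF cC] by blast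
  define N where "N = norm u0 + norm u1 + norm u2"
  have Npos: "N > 0" unfolding N_def using u(2) by (auto simp: add_pos_nonneg add_nonneg_pos)
  have cbound: "c \<le> 6 * R / N" if "(c, s) \<in> S" for c s
  proof -
    have h: "0 \<le> c" "s \<in> C" "s + c *\<^sub>R w1 \<in> C" "s + c *\<^sub>R w2 \<in> C" using that memS by auto
    have n1: "norm (c *\<^sub>R u0) \<le> 2 * R"
    proof -
      have "c *\<^sub>R u0 = (s + c *\<^sub>R w1) - s" unfolding w1_def by simp
      also have "norm \<dots> \<le> norm (s + c *\<^sub>R w1) + norm s" by (rule norm_triangle_ineq4)
      finally show ?thesis using R(2)[OF h(2)] R(2)[OF h(3)] by linarith
    qed
    have n2: "norm (c *\<^sub>R u1) \<le> 2 * R"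
    proof -
      have "c *\<^sub>R u1 = (s + c *\<^sub>R w2) - (s + c *\<^sub>R w1)" unfolding w1_def w2_def by (simp add: algebra_simps)
      also have "norm \<dots> \<le> norm (s + c *\<^sub>R w2) + norm (s + c *\<^sub>R w1)" by (rule norm_triangle_ineq4)
      finally show ?thesis using R(2)[OF h(4)] R(2)[OF h(3)] by linarith
    qed
    have n3: "norm (c *\<^sub>R u2) \<le> 2 * R"
    proof -
      have "c *\<^sub>R u2 = s - (s + c *\<^sub>R w2)" unfolding w2_def u2e by (simp add: algebra_simps)
      also have "norm \<dots> \<le> norm s + norm (s + c *\<^sub>R w2)" by (rule norm_triangle_ineq4)
      finally show ?thesis using R(2)[OF h(2)] R(2)[OF h(4)] by linarith
    qed
    have "c * N \<le> 6 * R" using n1 n2 n3 h(1) unfolding N_def by (simp add: distrib_left)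
    then show ?thesis using Npos by (simp add: field_simps)
  qed
  have bS: "bounded S"
    unfolding bounded_iff
  proof (intro exI[of _ "6 * R / N + R"] ballI)
    fix p assume p: "p \<in> S"
    obtain c s where cs: "p = (c, s)" by (cases p)
    have h: "0 \<le> c" "s \<in> C" using p cs memS by auto
    have "norm p \<le> norm c + norm s" unfolding cs by (rule norm_Pair_le)
    also have "\<dots> \<le> 6 * R / N + R" using cbound[of c s] p cs h R(2)[OF h(2)] by auto
    finally show "norm p \<le> 6 * R / N + R" .
  qed
  have clS: "closed S" unfolding S_def
    by (intro closed_Int closed_vimage clC closed_Collect_le continuous_intros)
  have cS: "compact S" using bS clS compact_eq_bounded_closed by blast
  have zS: "(0, 0) \<in> S" using memS cb_zero[OF C] by simp
  obtain p where p: "p \<in> S" "\<And>y. y \<in> S \<Longrightarrow> fst y \<le> fst p"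
    using continuous_attains_sup[OF cS _ continuous_on_fst[OF continuous_on_id]] zS by blast
  obtain c s where cs: "p = (c, s)" by (cases p)
  have h: "0 \<le> c" "s \<in> C" "s + c *\<^sub>R w1 \<in> C" "s + c *\<^sub>R w2 \<in> C" using p(1) cs memS by auto
  have cmax: "c' \<le> c" if "(c', s') \<in> S" for c' s' using p(2)[OF that] cs by simp
  obtain e where e: "e > 0" "cball 0 e \<subseteq> C" using cb_ball[OF C] by blast
  define d where "d = e / (norm w1 + norm w2 + 1)"
  have dpos: "d > 0" unfolding d_def using e by (simp add: add_nonneg_pos)
  have dw: "d * norm w \<le> e" if "norm w \<le> norm w1 + norm w2 + 1" for w
  proof -
    have "d * norm w \<le> d * (norm w1 + norm w2 + 1)" using dpos that by (intro mult_left_mono) auto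
    also have "\<dots> = e" unfolding d_def
      using add_nonneg_pos[OF add_nonneg_nonneg[OF norm_ge_zero norm_ge_zero], of 1 w1 w2] by simp
    finally show ?thesis .
  qed
  have "(d, 0) \<in> S" unfolding memS
    using dpos cb_zero[OF C] dw[of w1] dw[of w2] e(2) by (auto simp: subset_iff)
  then have cpos: "c > 0" using cmax dpos by fastforce
  define x0 where "x0 = s"
  define x1 where "x1 = s + c *\<^sub>R w1"
  define x2 where "x2 = s + c *\<^sub>R w2"
  have xC: "x0 \<in> C" "x1 \<in> C" "x2 \<in> C" using h unfolding x0_def x1_def x2_def by auto
  have nt: "\<not> (\<exists>t. x0 + t \<in> interior C \<and> x1 + t \<in> interior C \<and> x2 + t \<in> interior C)"
  proof
    assume "\<exists>t. x0 + t \<in> interior C \<and> x1 + t \<in> interior C \<and> x2 + t \<in> interior C"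
    then obtain t where t: "x0 + t \<in> interior C" "x1 + t \<in> interior C" "x2 + t \<in> interior C" by blast
    define z0 where "z0 = x0 + t"
    define z1 where "z1 = x1 + t"
    define z2 where "z2 = x2 + t"
    obtain e0 where e0: "e0 > 0" "ball z0 e0 \<subseteq> C" using t(1) mem_interior z0_def by blast
    obtain e1 where e1: "e1 > 0" "ball z1 e1 \<subseteq> C" using t(2) mem_interior z1_def by blast
    obtain e2 where e2: "e2 > 0" "ball z2 e2 \<subseteq> C" using t(3) mem_interior z2_def by blast
    define ee where "ee = min e0 (min e1 e2)"
    have ee: "ee > 0" "ee \<le> e0" "ee \<le> e1" "ee \<le> e2" unfolding ee_def using e0 e1 e2 by auto
    define l where "l = ee / (norm z0 + norm z1 + norm z2 + 1)"
    have lpos: "l > 0" unfolding l_def using ee by (simp add: add_nonneg_pos)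
    have lz: "l * norm z < ee" if "norm z \<le> norm z0 + norm z1 + norm z2" for z
    proof -
      have "l * norm z \<le> l * (norm z0 + norm z1 + norm z2)" using lpos that by (intro mult_left_mono) auto
      also have "\<dots> < l * (norm z0 + norm z1 + norm z2 + 1)" using lpos by simp
      also have "\<dots> = ee" unfolding l_def
        using add_nonneg_pos[OF add_nonneg_nonneg[OF add_nonneg_nonneg[OF norm_ge_zero norm_ge_zero] norm_ge_zero], of 1 z0 z1 z2] by simp
      finally show ?thesis .
    qed
    have inC: "(1 + l) *\<^sub>R z \<in> C" if "ball z ez \<subseteq> C" "ee \<le> ez" "norm z \<le> norm z0 + norm z1 + norm z2" for z ez
    proof -
      have "dist z ((1 + l) *\<^sub>R z) = l * norm z" using lpos
        by (simp add: dist_norm algebra_simps)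
      then have "dist z ((1 + l) *\<^sub>R z) < ez" using lz[OF that(3)] that(2) by linarith
      then show ?thesis using that(1) by auto
    qed
    have i0: "(1 + l) *\<^sub>R z0 \<in> C" by (rule inC[OF e0(2) ee(2)]) simp
    have i1: "(1 + l) *\<^sub>R z1 \<in> C" by (rule inC[OF e1(2) ee(3)]) simp
    have i2: "(1 + l) *\<^sub>R z2 \<in> C" by (rule inC[OF e2(2) ee(4)]) simp
    have "((1 + l) * c, (1 + l) *\<^sub>R (s + t)) \<in> S"
      unfolding memS
    proof (intro conjI)
      show "0 \<le> (1 + l) * c" using lpos h(1) by simp
      show "(1 + l) *\<^sub>R (s + t) \<in> C" using i0 unfolding z0_def x0_def .
      have "(1 + l) *\<^sub>R (s + t) + ((1 + l) * c) *\<^sub>R w1 = (1 + l) *\<^sub>R z1"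
        unfolding z1_def x1_def by (simp add: algebra_simps)
      then show "(1 + l) *\<^sub>R (s + t) + ((1 + l) * c) *\<^sub>R w1 \<in> C" using i1 by simp
      have "(1 + l) *\<^sub>R (s + t) + ((1 + l) * c) *\<^sub>R w2 = (1 + l) *\<^sub>R z2"
        unfolding z2_def x2_def by (simp add: algebra_simps)
      then show "(1 + l) *\<^sub>R (s + t) + ((1 + l) * c) *\<^sub>R w2 \<in> C" using i2 by simp
    qed
    then have "(1 + l) * c \<le> c" using cmax by blast
    moreover have "c * l > 0" using lpos cpos by simp
    ultimately show False by (simp add: algebra_simps)
  qed
  have F: "F3 C x0 x1 x2" by (rule sep3[OF C xC nt])
  have "x1 - x0 = c *\<^sub>R u0" "x2 - x1 = c *\<^sub>R u1" "x0 - x2 = c *\<^sub>R u2"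
    unfolding x0_def x1_def x2_def w1_def w2_def u2e by (simp_all add: algebra_simps)
  then show ?thesis using F cpos by blast
qed



lemma flip_eq: fixes a b n :: pt shows "a - b = k *\<^sub>R (- n) \<Longrightarrow> b - a = k *\<^sub>R n"
proof -
  assume h: "a - b = k *\<^sub>R (- n)"
  have "b - a = - (a - b)" by simp
  also have "\<dots> = k *\<^sub>R n" using h by simp
  finally show ?thesis .
qed

lemma D1:
  assumes K: "convex_body K" and T: "convex_body T" and F: "F3 K a b c"
  shows "\<exists>x y z. F3 T x y z \<and> Psi K x y z = Bf a b c x y z"
proof -
  obtain na nb nc where n: "na \<in> normal_cone K a" "nb \<in> normal_cone K b" "nc \<in> normal_cone K c"
    "na + nb + nc = 0" "na \<noteq> 0 \<or> nb \<noteq> 0 \<or> nc \<noteq> 0" and abc: "a \<in> K" "b \<in> K" "c \<in> K"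
    using F unfolding F3_def by blast
  have "(- nb) + (- nc) + (- na) = - (na + nb + nc)" by (simp add: algebra_simps)
  then have s: "(- nb) + (- nc) + (- na) = 0" using n(4) by simp
  have nz: "- nb \<noteq> 0 \<or> - nc \<noteq> 0 \<or> - na \<noteq> 0" using n(5) by auto
  obtain k x0 x1 x2 where k: "k > 0" "x1 - x0 = k *\<^sub>R (- nb)" "x2 - x1 = k *\<^sub>R (- nc)" "x0 - x2 = k *\<^sub>R (- na)"
    "F3 T x0 x1 x2"
    using gen3[OF T s nz] by blast
  have e1: "x2 - x0 = k *\<^sub>R na" using flip_eq[OF k(4)] .
  have e2: "x0 - x1 = k *\<^sub>R nb" using flip_eq[OF k(2)] .
  have e3: "x1 - x2 = k *\<^sub>R nc" using flip_eq[OF k(3)] .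
  have cK: "compact K" and neK: "K \<noteq> {}" using K cb_compact cb_ne by auto
  have "Psi K x0 x1 x2 = k * (na \<bullet> a) + k * (nb \<bullet> b) + k * (nc \<bullet> c)"
    unfolding Psi_def e1 e2 e3 using sf_scale[OF cK neK] sf_normal[OF cK] abc n(1-3) k(1) by simp
  also have "\<dots> = Bf a b c x0 x1 x2"
    unfolding Bf_alt e1 e2 e3 by (simp add: inner_commute)
  finally show ?thesis using k(5) by blast
qed

lemma D2:
  assumes K: "convex_body K" and T: "convex_body T" and F: "F3 T x y z"
  shows "\<exists>a b c. F3 K a b c \<and> Phi T a b c = Bf a b c x y z"
proof -
  obtain mx my mz where n: "mx \<in> normal_cone T x" "my \<in> normal_cone T y" "mz \<in> normal_cone T z"
    "mx + my + mz = 0" "mx \<noteq> 0 \<or> my \<noteq> 0 \<or> mz \<noteq> 0" and xyz: "x \<in> T" "y \<in> T" "z \<in> T"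
    using F unfolding F3_def by blast
  obtain k a b c where k: "k > 0" "b - a = k *\<^sub>R mx" "c - b = k *\<^sub>R my" "a - c = k *\<^sub>R mz"
    "F3 K a b c"
    using gen3[OF K n(4,5)] by blast
  have cT: "compact T" and neT: "T \<noteq> {}" using T cb_compact cb_ne by auto
  have "Phi T a b c = k * (mx \<bullet> x) + k * (my \<bullet> y) + k * (mz \<bullet> z)"
    unfolding Phi_def k(2-4) using sf_scale[OF cT neT] sf_normal[OF cT] xyz n(1-3) k(1) by simp
  also have "\<dots> = Bf a b c x y z"
    unfolding Bf_def k(2-4) by simp
  finally show ?thesis using k(5) by blast
qed

lemma closed_normal:
  assumes "continuous_on UNIV f" "continuous_on UNIV g"
  shows "closed {p. f p \<in> normal_cone K (g p)}"
proof -
  have "{p. f p \<in> normal_cone K (g p)} = (\<Inter>y\<in>K. {p. f p \<bullet> (y - g p) \<le> 0})"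
    unfolding normal_cone_def by auto
  moreover have "closed {p. f p \<bullet> (y - g p) \<le> 0}" for y
    by (intro closed_Collect_le continuous_intros assms)
  ultimately show ?thesis by auto
qed

lemma Phi_cont:
  assumes T: "convex_body T" and f: "continuous_on S fa" "continuous_on S fb" "continuous_on S fc"
  shows "continuous_on S (\<lambda>p. Phi T (fa p) (fb p) (fc p))"
proof -
  have sc: "continuous_on UNIV (sf T)" using sf_continuous cb_compact cb_ne T by blast
  have g: "continuous_on S (\<lambda>p. sf T (g p))" if "continuous_on S g" for g
    using continuous_on_compose2[OF sc that] by simp
  show ?thesis unfolding Phi_def by (intro continuous_intros g f)
qed

lemma EX:
  assumes K: "convex_body K" and T: "convex_body T" and F: "F3 K a0 b0 c0"
  shows "\<exists>a b c x y z. F3 K a b c \<and> x \<in> T \<and> y \<in> T \<and> z \<in> T \<and>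
     Phi T a b c = Bf a b c x y z \<and> Psi K x y z = Bf a b c x y z \<and>
     (\<forall>a' b' c'. F3 K a' b' c' \<longrightarrow> Phi T a b c \<le> Phi T a' b' c')"
proof -
  define A :: "(pt \<times> pt \<times> pt) \<times> (pt \<times> pt \<times> pt) \<Rightarrow> pt" where "A = (\<lambda>p. fst (fst p))"
  define B :: "(pt \<times> pt \<times> pt) \<times> (pt \<times> pt \<times> pt) \<Rightarrow> pt" where "B = (\<lambda>p. fst (snd (fst p)))"
  define C :: "(pt \<times> pt \<times> pt) \<times> (pt \<times> pt \<times> pt) \<Rightarrow> pt" where "C = (\<lambda>p. snd (snd (fst p)))"
  define NA :: "(pt \<times> pt \<times> pt) \<times> (pt \<times> pt \<times> pt) \<Rightarrow> pt" where "NA = (\<lambda>p. fst (snd p))"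
  define NB :: "(pt \<times> pt \<times> pt) \<times> (pt \<times> pt \<times> pt) \<Rightarrow> pt" where "NB = (\<lambda>p. fst (snd (snd p)))"
  define NC :: "(pt \<times> pt \<times> pt) \<times> (pt \<times> pt \<times> pt) \<Rightarrow> pt" where "NC = (\<lambda>p. snd (snd (snd p)))"
  have cont: "continuous_on UNIV A" "continuous_on UNIV B" "continuous_on UNIV C"
    "continuous_on UNIV NA" "continuous_on UNIV NB" "continuous_on UNIV NC"
    unfolding A_def B_def C_def NA_def NB_def NC_def by (intro continuous_intros)+
  define X where "X = ((K \<times> K \<times> K) \<times> (cball 0 1 \<times> cball 0 1 \<times> cball 0 1)) \<inter>
      ({p. NA p \<in> normal_cone K (A p)} \<inter> {p. NB p \<in> normal_cone K (B p)} \<inter> {p. NC p \<in> normal_cone K (C p)}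
       \<inter> {p. NA p + NB p + NC p = 0} \<inter> {p. norm (NA p) + norm (NB p) + norm (NC p) = 1})"
  have cK: "compact K" using K cb_compact by blast
  have cX: "compact X" unfolding X_def
    by (intro compact_Int_closed compact_Times cK compact_cball closed_Int closed_normal cont
        closed_Collect_eq continuous_intros)
  have memX: "((a, b, c), (na, nb, nc)) \<in> X \<longleftrightarrow> a \<in> K \<and> b \<in> K \<and> c \<in> K \<and>
     na \<in> normal_cone K a \<and> nb \<in> normal_cone K b \<and> nc \<in> normal_cone K c \<and>
     na + nb + nc = 0 \<and> norm na + norm nb + norm nc = 1" for a b c na nb nc
  proof -
    have "norm na + norm nb + norm nc = 1 \<Longrightarrow> norm na \<le> 1 \<and> norm nb \<le> 1 \<and> norm nc \<le> 1"
      using norm_ge_zero[of na] norm_ge_zero[of nb] norm_ge_zero[of nc] by linarith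
    then show ?thesis unfolding X_def A_def B_def C_def NA_def NB_def NC_def by auto
  qed
  have norm1: "\<exists>na nb nc. ((a, b, c), (na, nb, nc)) \<in> X" if FF: "F3 K a b c" for a b c
  proof -
    obtain na nb nc where n: "na \<in> normal_cone K a" "nb \<in> normal_cone K b" "nc \<in> normal_cone K c"
      "na + nb + nc = 0" "na \<noteq> 0 \<or> nb \<noteq> 0 \<or> nc \<noteq> 0" and abc: "a \<in> K" "b \<in> K" "c \<in> K"
      using FF unfolding F3_def by blast
    define s where "s = norm na + norm nb + norm nc"
    have "norm na > 0 \<or> norm nb > 0 \<or> norm nc > 0" using n(5) by auto
    then have spos: "s > 0" unfolding s_def
      using norm_ge_zero[of na] norm_ge_zero[of nb] norm_ge_zero[of nc] by (elim disjE) linarith+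
    have "(1/s) *\<^sub>R na + (1/s) *\<^sub>R nb + (1/s) *\<^sub>R nc = 0" using n(4)
      by (metis scaleR_right_distrib scaleR_zero_right)
    moreover have "norm ((1/s) *\<^sub>R na) + norm ((1/s) *\<^sub>R nb) + norm ((1/s) *\<^sub>R nc) = 1"
    proof -
      have nv: "norm ((1/s) *\<^sub>R v) = norm v / s" for v using spos by simp
      have "norm na / s + norm nb / s + norm nc / s = (norm na + norm nb + norm nc) / s"
        by (simp add: add_divide_distrib)
      also have "\<dots> = 1" using spos by (simp add: s_def[symmetric])
      finally show ?thesis unfolding nv .
    qed
    moreover have "(1/s) *\<^sub>R na \<in> normal_cone K a" "(1/s) *\<^sub>R nb \<in> normal_cone K b" "(1/s) *\<^sub>R nc \<in> normal_cone K c"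
      using n(1-3) spos by (auto intro: normal_cone_scale)
    ultimately show ?thesis using abc memX by blast
  qed
  obtain na0 nb0 nc0 where "((a0, b0, c0), (na0, nb0, nc0)) \<in> X" using norm1[OF F] by blast
  then have neX: "X \<noteq> {}" by auto
  have contf: "continuous_on X (\<lambda>p. Phi T (A p) (B p) (C p))"
    by (rule continuous_on_subset[OF Phi_cont[OF T cont(1-3)]]) simp
  obtain p where p: "p \<in> X" "\<And>p'. p' \<in> X \<Longrightarrow> Phi T (A p) (B p) (C p) \<le> Phi T (A p') (B p') (C p')"
    using continuous_attains_inf[OF cX neX contf] by blast
  obtain a b c na nb nc where pe: "p = ((a, b, c), (na, nb, nc))" by (metis prod.collapse)
  have pX: "a \<in> K \<and> b \<in> K \<and> c \<in> K \<and>
     na \<in> normal_cone K a \<and> nb \<in> normal_cone K b \<and> nc \<in> normal_cone K c \<and>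
     na + nb + nc = 0 \<and> norm na + norm nb + norm nc = 1" using p(1) pe memX by blast
  have "na \<noteq> 0 \<or> nb \<noteq> 0 \<or> nc \<noteq> 0" using pX by auto
  then have Fabc: "F3 K a b c" unfolding F3_def using pX by blast
  have minP: "Phi T a b c \<le> Phi T a' b' c'" if FF: "F3 K a' b' c'" for a' b' c'
  proof -
    obtain na' nb' nc' where "((a', b', c'), (na', nb', nc')) \<in> X" using norm1[OF FF] by blast
    from p(2)[OF this] show ?thesis using pe unfolding A_def B_def C_def by simp
  qed
  obtain x y z where xyz: "F3 T x y z" "Psi K x y z = Bf a b c x y z" using D1[OF K T Fabc] by blast
  obtain a' b' c' where abc': "F3 K a' b' c'" "Phi T a' b' c' = Bf a' b' c' x y z" using D2[OF K T xyz(1)] by blast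
  have xT: "x \<in> T" "y \<in> T" "z \<in> T" using xyz(1) unfolding F3_def by auto
  have a'K: "a' \<in> K" "b' \<in> K" "c' \<in> K" using abc'(1) unfolding F3_def by auto
  have cT: "compact T" using T cb_compact by blast
  have i1: "Phi T a b c \<le> Phi T a' b' c'" using minP[OF abc'(1)] .
  have i2: "Bf a' b' c' x y z \<le> Psi K x y z" using Bf_le_Psi[OF cK a'K] .
  have i3: "Bf a b c x y z \<le> Phi T a b c" using Bf_le_Phi[OF cT xT] .
  have "Phi T a b c = Bf a b c x y z" using i1 i2 i3 abc'(2) xyz(2) by linarith
  then show ?thesis using Fabc xT xyz(2) minP by blast
qed



definition tr3 :: "pt set \<Rightarrow> pt set \<Rightarrow> pt \<Rightarrow> pt \<Rightarrow> pt \<Rightarrow> pt \<Rightarrow> pt \<Rightarrow> pt \<Rightarrow> bool" where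
  "tr3 K T a b c x y z \<longleftrightarrow> a \<in> K \<and> b \<in> K \<and> c \<in> K \<and> x \<in> T \<and> y \<in> T \<and> z \<in> T \<and>
     b - a \<in> normal_cone T x \<and> c - b \<in> normal_cone T y \<and> a - c \<in> normal_cone T z \<and>
     z - x \<in> normal_cone K a \<and> x - y \<in> normal_cone K b \<and> y - z \<in> normal_cone K c"

lemma tr3_rot: "tr3 K T a b c x y z \<Longrightarrow> tr3 K T b c a y z x"
  unfolding tr3_def by auto

lemma Phi_rot: "Phi T b c a = Phi T a b c" unfolding Phi_def by simp

lemma tr3_of_eq:
  assumes K: "convex_body K" and T: "convex_body T" and abc: "a \<in> K" "b \<in> K" "c \<in> K"
    and xyz: "x \<in> T" "y \<in> T" "z \<in> T"
    and e1: "Phi T a b c = Bf a b c x y z" and e2: "Psi K x y z = Bf a b c x y z"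
  shows "tr3 K T a b c x y z"
proof -
  have cK: "compact K" and cT: "compact T" using K T cb_compact by auto
  have t1: "sf T (b - a) = (b - a) \<bullet> x" "sf T (c - b) = (c - b) \<bullet> y" "sf T (a - c) = (a - c) \<bullet> z"
    using sf_ge[OF cT xyz(1), of "b - a"] sf_ge[OF cT xyz(2), of "c - b"] sf_ge[OF cT xyz(3), of "a - c"] e1
    unfolding Phi_def Bf_def by linarith+
  have t2: "sf K (z - x) = (z - x) \<bullet> a" "sf K (x - y) = (x - y) \<bullet> b" "sf K (y - z) = (y - z) \<bullet> c"
    using sf_ge[OF cK abc(1), of "z - x"] sf_ge[OF cK abc(2), of "x - y"] sf_ge[OF cK abc(3), of "y - z"] e2
    unfolding Psi_def Bf_alt by (simp_all add: inner_commute)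
  show ?thesis unfolding tr3_def using abc xyz t1 t2 normal_coneI_sf[OF cT] normal_coneI_sf[OF cK] by auto
qed

lemma normal_frontier:
  assumes "convex_body C" "x \<in> C" "v \<in> normal_cone C x" "v \<noteq> 0" shows "x \<in> frontier C"
  using max_frontier[OF cb_compact[OF assms(1)] assms(2,4)] sf_normal[OF cb_compact[OF assms(1)] assms(2,3)] by simp

lemma seg_of_par:
  fixes u v w :: pt
  assumes "u - w = k *\<^sub>R (w - v)" "k > 0" shows "w \<in> closed_segment v u"
proof -
  have "u + k *\<^sub>R v = (1 + k) *\<^sub>R w" using assms(1) by (simp add: algebra_simps)
  then have "w = (1 / (1 + k)) *\<^sub>R (u + k *\<^sub>R v)" using assms(2)
    by (metis add_pos_pos nonzero_eq_divide_eq order_less_irrefl scaleR_scaleR divide_inverse_commute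
        inverse_eq_divide mult.commute real_scaleR_def scaleR_one zero_less_one)
  then have "w = (1 - 1 / (1 + k)) *\<^sub>R v + (1 / (1 + k)) *\<^sub>R u" using assms(2)
    by (simp add: algebra_simps divide_simps)
  moreover have "0 \<le> 1 / (1 + k)" "1 / (1 + k) \<le> 1" using assms(2) by auto
  ultimately show ?thesis unfolding in_segment by blast
qed

lemma all3: "(\<forall>j<(3::nat). P j) = (P 0 \<and> P 1 \<and> P 2)"
proof
  assume "\<forall>j<3. P j" then show "P 0 \<and> P 1 \<and> P 2" by simp
next
  assume h: "P 0 \<and> P 1 \<and> P 2"
  show "\<forall>j<3. P j"
  proof (intro allI impI)
    fix j :: nat assume "j < 3"
    then have "j = 0 \<or> j = 1 \<or> j = 2" by linarith
    then show "P j" using h by auto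
  qed
qed

lemma all2: "(\<forall>j<(2::nat). P j) = (P 0 \<and> P 1)"
proof
  assume "\<forall>j<2. P j" then show "P 0 \<and> P 1" by simp
next
  assume h: "P 0 \<and> P 1"
  show "\<forall>j<2. P j"
  proof (intro allI impI)
    fix j :: nat assume "j < 2"
    then have "j = 0 \<or> j = 1" by linarith
    then show "P j" using h by auto
  qed
qed

lemma ellT3: "ellT T [a, b, c] = mu_polar T (b - a) + mu_polar T (c - b) + mu_polar T (a - c)"
proof -
  have s: "{..<length [a, b, c]} = {0, 1, 2}" by auto
  show ?thesis unfolding ellT_def s by (simp add: nxt_def)
qed

lemma ellT2: "ellT T [a, b] = mu_polar T (b - a) + mu_polar T (a - b)"
proof -
  have s: "{..<length [a, b]} = {0, 1}" by auto
  show ?thesis unfolding ellT_def s by (simp add: nxt_def)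
qed

lemma traj3_intro:
  assumes "a \<in> frontier K" "b \<in> frontier K" "c \<in> frontier K"
    "a \<noteq> b" "b \<noteq> c" "c \<noteq> a"
    "a \<notin> closed_segment c b" "b \<notin> closed_segment a c" "c \<notin> closed_segment b a"
    "x \<in> frontier T" "y \<in> frontier T" "z \<in> frontier T"
    "b - a \<in> normal_cone T x" "c - b \<in> normal_cone T y" "a - c \<in> normal_cone T z"
    "z - x \<in> normal_cone K a" "x - y \<in> normal_cone K b" "y - z \<in> normal_cone K c"
  shows "billiard_traj_with K T [a, b, c] (\<lambda>j. if j = 0 then x else if j = 1 then y else z)"
proof -
  have u1: "y - x \<in> uminus ` normal_cone K b" using assms(17) by (metis minus_diff_eq rev_image_eqI)
  have u2: "z - y \<in> uminus ` normal_cone K c" using assms(18) by (metis minus_diff_eq rev_image_eqI)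
  have u3: "x - z \<in> uminus ` normal_cone K a" using assms(16) by (metis minus_diff_eq rev_image_eqI)
  show ?thesis
  proof -
    have len: "length [a, b, c] = 3" by simp
    show ?thesis
      unfolding billiard_traj_with_def closed_polygon_def len all3
      using assms u1 u2 u3 by (simp add: nxt_def prv_def)
  qed
qed

lemma traj2_intro:
  assumes "a \<in> frontier K" "b \<in> frontier K" "a \<noteq> b"
    "x \<in> frontier T" "z \<in> frontier T"
    "b - a \<in> normal_cone T x" "a - b \<in> normal_cone T z"
    "x - z \<in> normal_cone K b" "z - x \<in> normal_cone K a"
  shows "billiard_traj_with K T [a, b] (\<lambda>j. if j = 0 then x else z)"
proof -
  have u1: "z - x \<in> uminus ` normal_cone K b" using assms(8) by (metis minus_diff_eq rev_image_eqI)
  have u3: "x - z \<in> uminus ` normal_cone K a" using assms(9) by (metis minus_diff_eq rev_image_eqI)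
  show ?thesis
  proof -
    have len: "length [a, b] = 2" by simp
    show ?thesis
      unfolding billiard_traj_with_def closed_polygon_def len all2
      using assms u1 u3 by (simp add: nxt_def prv_def)
  qed
qed



locale setting =
  fixes K T :: "pt set"
  assumes K: "convex_body K" and T: "convex_body T"
    and sc: "strictly_convex T" and sm: "smooth_body T"
begin

lemma cK: "compact K" using K cb_compact by blast
lemma cT: "compact T" using T cb_compact by blast
lemma neT: "T \<noteq> {}" using T cb_ne by blast
lemma neK: "K \<noteq> {}" using K cb_ne by blast

lemma par_seg:
  assumes "p \<in> frontier T" "u \<in> normal_cone T p" "w \<in> normal_cone T p" "u \<noteq> 0" "w \<noteq> 0"
  shows "\<exists>k>0. w = k *\<^sub>R u"
  using smooth_parallel[OF T sm assms] .

lemma prune_nc: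
  assumes tr: "tr3 K T a b c x y z" and d: "a \<noteq> b" "b \<noteq> c" "c \<noteq> a"
    and s: "a \<notin> closed_segment c b" "b \<notin> closed_segment a c" "c \<notin> closed_segment b a"
  shows "billiard_traj K T [a, b, c] \<and> ellT T [a, b, c] = Phi T a b c"
proof -
  have h: "a \<in> K" "b \<in> K" "c \<in> K" "x \<in> T" "y \<in> T" "z \<in> T"
     "b - a \<in> normal_cone T x" "c - b \<in> normal_cone T y" "a - c \<in> normal_cone T z"
     "z - x \<in> normal_cone K a" "x - y \<in> normal_cone K b" "y - z \<in> normal_cone K c"
    using tr unfolding tr3_def by auto
  have nz: "b - a \<noteq> 0" "c - b \<noteq> 0" "a - c \<noteq> 0" using d by auto
  have fx: "x \<in> frontier T" using normal_frontier[OF T h(4) h(7) nz(1)] .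
  have fy: "y \<in> frontier T" using normal_frontier[OF T h(5) h(8) nz(2)] .
  have fz: "z \<in> frontier T" using normal_frontier[OF T h(6) h(9) nz(3)] .
  have zx: "z - x \<noteq> 0"
  proof
    assume "z - x = 0"
    then have "z = x" by simp
    then have "a - c \<in> normal_cone T x" using h(9) by simp
    then obtain k where k: "k > 0" "a - c = k *\<^sub>R (b - a)" using par_seg[OF fx h(7) _ nz(1) nz(3)] by blast
    have "c - a = k *\<^sub>R (a - b)" using k(2) by (metis minus_diff_eq scaleR_minus_right)
    then have "a \<in> closed_segment b c" using seg_of_par k(1) by blast
    then show False using s(1) closed_segment_commute by blast
  qed
  have xy: "x - y \<noteq> 0"
  proof
    assume "x - y = 0"
    then have "y = x" by simp
    then have "c - b \<in> normal_cone T x" using h(8) by simp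
    then obtain k where k: "k > 0" "c - b = k *\<^sub>R (b - a)" using par_seg[OF fx h(7) _ nz(1) nz(2)] by blast
    then have "b \<in> closed_segment a c" using seg_of_par k(1) by blast
    then show False using s(2) by blast
  qed
  have yz: "y - z \<noteq> 0"
  proof
    assume "y - z = 0"
    then have "z = y" by simp
    then have "a - c \<in> normal_cone T y" using h(9) by simp
    then obtain k where k: "k > 0" "a - c = k *\<^sub>R (c - b)" using par_seg[OF fy h(8) _ nz(2) nz(3)] by blast
    then have "c \<in> closed_segment b a" using seg_of_par k(1) by blast
    then show False using s(3) by blast
  qed
  have fa: "a \<in> frontier K" using normal_frontier[OF K h(1) h(10) zx] .
  have fb: "b \<in> frontier K" using normal_frontier[OF K h(2) h(11) xy] .
  have fc: "c \<in> frontier K" using normal_frontier[OF K h(3) h(12) yz] .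
  have "billiard_traj_with K T [a, b, c] (\<lambda>j. if j = 0 then x else if j = 1 then y else z)"
    by (rule traj3_intro[OF fa fb fc d s fx fy fz h(7-12)])
  then show ?thesis unfolding billiard_traj_def ellT3 Phi_def mu_polar_sf[OF T] by blast
qed

lemma x_ne_z:
  assumes "x \<in> T" "z \<in> T" "v \<noteq> 0" "v \<in> normal_cone T x" "- v \<in> normal_cone T z"
  shows "x \<noteq> z"
proof
  assume "x = z"
  have "sf T v = v \<bullet> x" "sf T (- v) = (- v) \<bullet> x" using sf_normal[OF cT] assms \<open>x = z\<close> by auto
  moreover have "sf T v > 0" "sf T (- v) > 0" using sf_pos[OF T] assms(3) by auto
  ultimately show False by simp
qed

lemma prune_eq:
  assumes tr: "tr3 K T a b b x y z" and d: "a \<noteq> b"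
  shows "billiard_traj K T [a, b] \<and> ellT T [a, b] = Phi T a b b"
proof -
  have h: "a \<in> K" "b \<in> K" "x \<in> T" "y \<in> T" "z \<in> T"
     "b - a \<in> normal_cone T x" "a - b \<in> normal_cone T z"
     "z - x \<in> normal_cone K a" "x - y \<in> normal_cone K b" "y - z \<in> normal_cone K b"
    using tr unfolding tr3_def by auto
  have nz: "b - a \<noteq> 0" "a - b \<noteq> 0" using d by auto
  have xz: "x \<noteq> z" using x_ne_z[OF h(3,5) nz(1) h(6)] h(7) by (metis minus_diff_eq)
  have nb: "x - z \<in> normal_cone K b" using normal_cone_add[OF h(9,10)] by simp
  have fx: "x \<in> frontier T" using normal_frontier[OF T h(3) h(6) nz(1)] .
  have fz: "z \<in> frontier T" using normal_frontier[OF T h(5) h(7) nz(2)] .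
  have fa: "a \<in> frontier K" using normal_frontier[OF K h(1) h(8)] xz by simp
  have fb: "b \<in> frontier K" using normal_frontier[OF K h(2) nb] xz by simp
  have "billiard_traj_with K T [a, b] (\<lambda>j. if j = 0 then x else z)"
    by (rule traj2_intro[OF fa fb d fx fz h(6,7) nb h(8)])
  then show ?thesis unfolding billiard_traj_def ellT2 Phi_def mu_polar_sf[OF T]
    using sf_zero[OF cT neT] by auto
qed

lemma prune_mid:
  assumes tr: "tr3 K T a b c x y z" and m: "b \<in> open_segment a c"
  shows "billiard_traj K T [a, c] \<and> ellT T [a, c] = Phi T a b c"
proof -
  have h: "a \<in> K" "b \<in> K" "c \<in> K" "x \<in> T" "y \<in> T" "z \<in> T"
     "b - a \<in> normal_cone T x" "c - b \<in> normal_cone T y" "a - c \<in> normal_cone T z"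
     "z - x \<in> normal_cone K a" "x - y \<in> normal_cone K b" "y - z \<in> normal_cone K c"
    using tr unfolding tr3_def by auto
  obtain u where u: "a \<noteq> c" "0 < u" "u < 1" "b = (1 - u) *\<^sub>R a + u *\<^sub>R c" using m unfolding in_segment by blast
  have ba: "b - a = u *\<^sub>R (c - a)" using u(4) by (simp add: algebra_simps)
  have cb: "c - b = (1 - u) *\<^sub>R (c - a)" using u(4) by (simp add: algebra_simps)
  have nz: "c - a \<noteq> 0" "a - c \<noteq> 0" using u(1) by auto
  have nx: "c - a \<in> normal_cone T x"
  proof -
    have "(1/u) *\<^sub>R (b - a) \<in> normal_cone T x" using normal_cone_scale[OF h(7)] u(2) by simp
    then show ?thesis unfolding ba using u(2) by simp
  qed
  have ny: "c - a \<in> normal_cone T y"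
  proof -
    have "(1/(1-u)) *\<^sub>R (c - b) \<in> normal_cone T y" using normal_cone_scale[OF h(8)] u(3) by simp
    then show ?thesis unfolding cb using u(3) by simp
  qed
  have "x = y" using unique_max[OF sc cT h(4,5) nz(1)] sf_normal[OF cT h(4) nx] sf_normal[OF cT h(5) ny] by simp
  then have nc: "x - z \<in> normal_cone K c" using h(12) by simp
  have xz: "x \<noteq> z" using x_ne_z[OF h(4,6) nz(1) nx] h(9) by (metis minus_diff_eq)
  have fx: "x \<in> frontier T" using normal_frontier[OF T h(4) nx nz(1)] .
  have fz: "z \<in> frontier T" using normal_frontier[OF T h(6) h(9) nz(2)] .
  have fa: "a \<in> frontier K" using normal_frontier[OF K h(1) h(10)] xz by simp
  have fc: "c \<in> frontier K" using normal_frontier[OF K h(3) nc] xz by simp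
  have "billiard_traj_with K T [a, c] (\<lambda>j. if j = 0 then x else z)"
    by (rule traj2_intro[OF fa fc u(1) fx fz nx h(9) nc h(10)])
  moreover have "Phi T a b c = sf T (c - a) + sf T (a - c)"
    unfolding Phi_def ba cb using sf_scale[OF cT neT, of u "c - a"] sf_scale[OF cT neT, of "1 - u" "c - a"] u(2,3)
    by (simp add: algebra_simps)
  ultimately show ?thesis unfolding billiard_traj_def ellT2 mu_polar_sf[OF T] by auto
qed

lemma prune:
  assumes tr: "tr3 K T a b c x y z" and nc: "\<not> (a = b \<and> b = c)"
  shows "\<exists>Q. billiard_traj K T Q \<and> ellT T Q = Phi T a b c"
proof -
  have tr2: "tr3 K T b c a y z x" using tr3_rot[OF tr] .
  have tr3': "tr3 K T c a b z x y" using tr3_rot[OF tr2] .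
  have P2: "Phi T b c a = Phi T a b c" and P3: "Phi T c a b = Phi T a b c" by (simp_all add: Phi_def)
  show ?thesis
  proof (cases "b = c")
    case True
    then show ?thesis using prune_eq[of a b x y z] tr nc by auto
  next
    case bc: False
    show ?thesis
    proof (cases "c = a")
      case True
      then show ?thesis using prune_eq[of b c y z x] tr2 bc P2 by auto
    next
      case ca: False
      show ?thesis
      proof (cases "a = b")
        case True
        then show ?thesis using prune_eq[of c a z x y] tr3' ca P3 by auto
      next
        case ab: False
        show ?thesis
        proof (cases "b \<in> closed_segment a c")
          case True
          then have "b \<in> open_segment a c" using ab bc by (simp add: open_segment_def)
          then show ?thesis using prune_mid[OF tr] by blast
        next
          case s2: False
          show ?thesis
          proof (cases "c \<in> closed_segment b a")
            case True
            then have "c \<in> open_segment b a" using bc ca by (simp add: open_segment_def)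
            then show ?thesis using prune_mid[OF tr2] P2 by metis
          next
            case s3: False
            show ?thesis
            proof (cases "a \<in> closed_segment c b")
              case True
              then have "a \<in> open_segment c b" using ab ca by (simp add: open_segment_def)
              then show ?thesis using prune_mid[OF tr3'] P3 by metis
            next
              case s1: False
              show ?thesis using prune_nc[OF tr ab bc ca s1 s2 s3] by blast
            qed
          qed
        qed
      qed
    qed
  qed
qed

end



lemma nxt_lt: "0 < m \<Longrightarrow> nxt m j < m" unfolding nxt_def by simp
lemma prv_lt: "0 < m \<Longrightarrow> prv m j < m" unfolding prv_def by simp

lemma nxt_prv: assumes "j < m" shows "nxt m (prv m j) = j"
proof -
  have m: "m \<ge> 1" using assms by simp
  have "nxt m (prv m j) = Suc ((j + m - 1) mod m) mod m" unfolding nxt_def prv_def by simp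
  also have "\<dots> = Suc (j + m - 1) mod m" by (rule mod_Suc_eq)
  also have "Suc (j + m - 1) = j + m" using m by simp
  also have "(j + m) mod m = j" using assms by simp
  finally show ?thesis .
qed

lemma prv_nxt: assumes "j < m" shows "prv m (nxt m j) = j"
proof -
  have m: "m \<ge> 1" using assms by simp
  have "prv m (nxt m j) = (Suc j mod m + (m - 1)) mod m" unfolding nxt_def prv_def using m by simp
  also have "\<dots> = (Suc j + (m - 1)) mod m" by (rule mod_add_left_eq)
  also have "Suc j + (m - 1) = j + m" using m by simp
  also have "(j + m) mod m = j" using assms by simp
  finally show ?thesis .
qed

lemma nxt_small: "Suc j < m \<Longrightarrow> nxt m j = Suc j" unfolding nxt_def by simp
lemma nxt_last: "0 < m \<Longrightarrow> nxt m (m - 1) = 0" unfolding nxt_def by simp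

definition det2 :: "pt \<Rightarrow> pt \<Rightarrow> real" where
  "det2 u v = u $ 1 * v $ 2 - u $ 2 * v $ 1"

lemma pt_eqI: fixes u v :: pt shows "u $ 1 = v $ 1 \<Longrightarrow> u $ 2 = v $ 2 \<Longrightarrow> u = v"
  by (simp add: vec_eq_iff forall_2)

lemma pt_zero: fixes u :: pt shows "u \<noteq> 0 \<Longrightarrow> u $ 1 \<noteq> 0 \<or> u $ 2 \<noteq> 0"
  by (auto simp: vec_eq_iff forall_2)

lemma det_zero_par:
  assumes "det2 u v = 0" "u \<noteq> 0" shows "\<exists>s. v = s *\<^sub>R u"
proof (cases "u $ 1 = 0")
  case True
  then have u2: "u $ 2 \<noteq> 0" using pt_zero[OF assms(2)] by simp
  have "v = (v $ 2 / u $ 2) *\<^sub>R u"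
  proof (rule pt_eqI)
    show "v $ 1 = ((v $ 2 / u $ 2) *\<^sub>R u) $ 1" using assms(1) True u2 unfolding det2_def by (simp add: field_simps)
    show "v $ 2 = ((v $ 2 / u $ 2) *\<^sub>R u) $ 2" using u2 by simp
  qed
  then show ?thesis by blast
next
  case False
  have "v = (v $ 1 / u $ 1) *\<^sub>R u"
  proof (rule pt_eqI)
    show "v $ 1 = ((v $ 1 / u $ 1) *\<^sub>R u) $ 1" using False by simp
    show "v $ 2 = ((v $ 1 / u $ 1) *\<^sub>R u) $ 2" using assms(1) False unfolding det2_def
      by (simp add: field_simps)
  qed
  then show ?thesis by blast
qed

lemma det_span:
  assumes "det2 u v \<noteq> 0" shows "w = (det2 w v / det2 u v) *\<^sub>R u + (det2 u w / det2 u v) *\<^sub>R v"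
proof -
  have e: "det2 u v *\<^sub>R w = det2 w v *\<^sub>R u + det2 u w *\<^sub>R v"
  proof (rule pt_eqI)
    show "(det2 u v *\<^sub>R w) $ 1 = (det2 w v *\<^sub>R u + det2 u w *\<^sub>R v) $ 1"
      unfolding det2_def by (simp add: algebra_simps)
    show "(det2 u v *\<^sub>R w) $ 2 = (det2 w v *\<^sub>R u + det2 u w *\<^sub>R v) $ 2"
      unfolding det2_def by (simp add: algebra_simps)
  qed
  have "w = (1 / det2 u v) *\<^sub>R (det2 u v *\<^sub>R w)" using assms by simp
  also have "\<dots> = (det2 w v / det2 u v) *\<^sub>R u + (det2 u w / det2 u v) *\<^sub>R v"
    unfolding e by (simp add: scaleR_add_right)
  finally show ?thesis .
qed

lemma det2_scale: "det2 u (s *\<^sub>R u) = 0" unfolding det2_def by simp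

context setting
begin

lemma no_three_collinear:
  assumes "x \<in> frontier T" "y \<in> frontier T" "z \<in> frontier T" "x \<noteq> y" "y \<noteq> z" "z \<noteq> x"
    "det2 (x - y) (y - z) = 0"
  shows False
proof -
  obtain s where s: "y - z = s *\<^sub>R (x - y)" using det_zero_par[OF assms(7)] assms(4) by auto
  have "collinear {x, y, z}"
    unfolding collinear_def
  proof (intro exI[of _ "x - y"] ballI)
    fix a b assume a: "a \<in> {x, y, z}" and b: "b \<in> {x, y, z}"
    have zz: "z = y - s *\<^sub>R (x - y)" using s by (simp add: algebra_simps)
    have off: "\<exists>c. w - y = c *\<^sub>R (x - y)" if "w \<in> {x, y, z}" for w
    proof -
      have "x - y = 1 *\<^sub>R (x - y)" "y - y = 0 *\<^sub>R (x - y)" "z - y = (- s) *\<^sub>R (x - y)"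
        using zz by simp_all
      then show ?thesis using that by blast
    qed
    obtain ca cb where c: "a - y = ca *\<^sub>R (x - y)" "b - y = cb *\<^sub>R (x - y)" using off a b by blast
    have "a - b = (a - y) - (b - y)" by simp
    also have "\<dots> = (ca - cb) *\<^sub>R (x - y)" unfolding c by (simp add: scaleR_diff_left)
    finally show "\<exists>c. a - b = c *\<^sub>R (x - y)" by blast
  qed
  then have "between (y, z) x \<or> between (z, x) y \<or> between (x, y) z" using collinear_between_cases by blast
  then have "x \<in> open_segment y z \<or> y \<in> open_segment z x \<or> z \<in> open_segment x y"
    using assms(4-6) by (auto simp: between_mem_segment open_segment_def)
  moreover have "x \<in> T" "y \<in> T" "z \<in> T" using assms(1-3) cb_frontier[OF T] by auto
  moreover have oi: "open_segment u w \<subseteq> interior T" if "u \<in> T" "w \<in> T" "u \<noteq> w" for u w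
    using sc that unfolding strictly_convex_def by blast
  ultimately have "x \<in> interior T \<or> y \<in> interior T \<or> z \<in> interior T"
    using assms(4-6) by (elim disjE) (blast dest: oi)+
  then show False using assms(1-3) by (auto simp: frontier_def)
qed

lemma traj_facts:
  assumes tr: "billiard_traj_with K T q p" and m: "m = length q"
  shows "m \<ge> 2"
    and "\<And>j. j < m \<Longrightarrow> p j \<in> frontier T \<and> p j \<in> T \<and> q ! nxt m j - q ! j \<in> normal_cone T (p j) \<and> q ! nxt m j - q ! j \<noteq> 0"
    and "\<And>j. j < m \<Longrightarrow> p j - p (nxt m j) \<in> normal_cone K (q ! nxt m j)"
    and "\<And>j. j < m \<Longrightarrow> q ! j \<in> K \<and> q ! j \<in> frontier K"
    and "\<And>j. j < m \<Longrightarrow> q ! j \<noteq> q ! nxt m j \<and> q ! j \<notin> closed_segment (q ! prv m j) (q ! nxt m j)"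
proof -
  have cp: "closed_polygon q" and sq: "set q \<subseteq> frontier K" and
    h: "\<And>j. j < m \<Longrightarrow> p j \<in> frontier T \<and> q ! nxt m j - q ! j \<in> normal_cone T (p j) \<and>
        p (nxt m j) - p j \<in> uminus ` normal_cone K (q ! nxt m j)"
    using tr m unfolding billiard_traj_with_def by auto
  show m2: "m \<ge> 2" using cp m unfolding closed_polygon_def by simp
  show cpj: "\<And>j. j < m \<Longrightarrow> q ! j \<noteq> q ! nxt m j \<and> q ! j \<notin> closed_segment (q ! prv m j) (q ! nxt m j)"
    using cp m unfolding closed_polygon_def by simp
  show "\<And>j. j < m \<Longrightarrow> p j \<in> frontier T \<and> p j \<in> T \<and> q ! nxt m j - q ! j \<in> normal_cone T (p j) \<and> q ! nxt m j - q ! j \<noteq> 0"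
    using h cpj cb_frontier[OF T] by (metis eq_iff_diff_eq_0)
  show "\<And>j. j < m \<Longrightarrow> p j - p (nxt m j) \<in> normal_cone K (q ! nxt m j)"
  proof -
    fix j assume "j < m"
    then obtain w where "w \<in> normal_cone K (q ! nxt m j)" "p (nxt m j) - p j = - w" using h by blast
    then show "p j - p (nxt m j) \<in> normal_cone K (q ! nxt m j)" by (metis minus_diff_eq minus_minus)
  qed
  show "\<And>j. j < m \<Longrightarrow> q ! j \<in> K \<and> q ! j \<in> frontier K"
    using sq m cb_frontier[OF K] by (metis nth_mem subsetD)
qed

end



lemma F3_nonconst:
  assumes K: "convex_body K" and F: "F3 K a a a" shows False
proof -
  obtain na nb nc where n: "na \<in> normal_cone K a" "nb \<in> normal_cone K a" "nc \<in> normal_cone K a"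
    "na + nb + nc = 0" "na \<noteq> 0 \<or> nb \<noteq> 0 \<or> nc \<noteq> 0" and a: "a \<in> K"
    using F unfolding F3_def by blast
  have ge: "w \<bullet> a \<ge> 0" if "w \<in> normal_cone K a" for w
    using pointed[OF K a that] by (cases "w = 0") auto
  have gt: "w \<bullet> a > 0" if "w \<in> normal_cone K a" "w \<noteq> 0" for w
    using pointed[OF K a that] .
  have "(na + nb + nc) \<bullet> a = 0" using n(4) by simp
  then have s: "na \<bullet> a + nb \<bullet> a + nc \<bullet> a = 0" by (simp add: inner_add_left)
  show False using n(5) ge[OF n(1)] ge[OF n(2)] ge[OF n(3)] gt[OF n(1)] gt[OF n(2)] gt[OF n(3)] s
    by (elim disjE) linarith+
qed

context setting
begin

lemma shorter_contra:
  assumes mt: "minimizing_traj K T q" and F: "F3 K a b c" and lt: "Phi T a b c < ellT T q"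
  shows False
proof -
  obtain a' b' c' x y z where e: "F3 K a' b' c'" "x \<in> T" "y \<in> T" "z \<in> T"
     "Phi T a' b' c' = Bf a' b' c' x y z" "Psi K x y z = Bf a' b' c' x y z"
     "\<forall>a'' b'' c''. F3 K a'' b'' c'' \<longrightarrow> Phi T a' b' c' \<le> Phi T a'' b'' c''"
    using EX[OF K T F] by blast
  have abc: "a' \<in> K" "b' \<in> K" "c' \<in> K" using e(1) unfolding F3_def by auto
  have tr: "tr3 K T a' b' c' x y z" using tr3_of_eq[OF K T abc e(2-4) e(5,6)] .
  have nc: "\<not> (a' = b' \<and> b' = c')" using F3_nonconst[OF K] e(1) by blast
  obtain Q where Q: "billiard_traj K T Q" "ellT T Q = Phi T a' b' c'" using prune[OF tr nc] by blast
  have "ellT T q \<le> ellT T Q" using mt Q(1) unfolding minimizing_traj_def by blast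
  moreover have "Phi T a' b' c' \<le> Phi T a b c" using e(7) F by blast
  ultimately show False using Q(2) lt by linarith
qed

lemma p_neq:
  assumes tr: "billiard_traj_with K T q p" and m: "m = length q" and j: "j < m"
  shows "p j \<noteq> p (nxt m j)"
proof
  assume eq: "p j = p (nxt m j)"
  have m2: "m \<ge> 2" using traj_facts(1)[OF tr m] .
  define i where "i = nxt m j"
  have i: "i < m" unfolding i_def using nxt_lt m2 by simp
  have hj: "p j \<in> frontier T" "q ! i - q ! j \<in> normal_cone T (p j)" "q ! i - q ! j \<noteq> 0"
    using traj_facts(2)[OF tr m j] unfolding i_def by auto
  have hi: "q ! nxt m i - q ! i \<in> normal_cone T (p j)" "q ! nxt m i - q ! i \<noteq> 0"
    using traj_facts(2)[OF tr m i] eq unfolding i_def by auto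
  obtain k where k: "k > 0" "q ! nxt m i - q ! i = k *\<^sub>R (q ! i - q ! j)"
    using par_seg[OF hj(1) hj(2) hi(1) hj(3) hi(2)] by blast
  have "q ! i \<in> closed_segment (q ! j) (q ! nxt m i)" using seg_of_par[OF k(2) k(1)] .
  moreover have "prv m i = j" unfolding i_def using prv_nxt[OF j] .
  ultimately show False using traj_facts(5)[OF tr m i] by simp
qed

lemma normals_facts:
  assumes tr: "billiard_traj_with K T q p" and m: "m = length q" and i: "i < m"
  shows "p (prv m i) - p i \<in> normal_cone K (q ! i)" "p (prv m i) - p i \<noteq> 0"
proof -
  have m2: "m \<ge> 2" using traj_facts(1)[OF tr m] .
  have pi: "prv m i < m" using prv_lt m2 by simp
  show "p (prv m i) - p i \<in> normal_cone K (q ! i)"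
    using traj_facts(3)[OF tr m pi] nxt_prv[OF i] by simp
  show "p (prv m i) - p i \<noteq> 0" using p_neq[OF tr m pi] nxt_prv[OF i] by simp
qed

lemma sum_normals:
  assumes tr: "billiard_traj_with K T q p" and m: "m = length q"
  shows "(\<Sum>i<m. p (prv m i) - p i) = 0"
proof -
  have m2: "m \<ge> 2" using traj_facts(1)[OF tr m] .
  have "(\<Sum>i<m. p (prv m i)) = (\<Sum>i<m. p i)"
    by (rule sum.reindex_bij_witness[where i = "nxt m" and j = "prv m"])
       (use m2 nxt_prv prv_nxt nxt_lt prv_lt in auto)
  then show ?thesis by (simp add: sum_subtractf)
qed

lemma ellT_formula:
  assumes tr: "billiard_traj_with K T q p" and m: "m = length q"
  shows "ellT T q = (\<Sum>j<m. sf T (q ! nxt m j - q ! j))"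
  unfolding ellT_def mu_polar_sf[OF T] m ..

end



context setting
begin

lemma strict_part:
  assumes tr: "billiard_traj_with K T q p" and m: "m = length q"
    and J: "J \<subseteq> {..<m}" "j \<in> J" "nxt m j \<in> J"
  shows "sf T (\<Sum>i\<in>J. q ! nxt m i - q ! i) < (\<Sum>i\<in>J. sf T (q ! nxt m i - q ! i))"
proof -
  define v where "v i = q ! nxt m i - q ! i" for i
  have fJ: "finite J" using J(1) finite_subset by blast
  have jm: "j < m" and njm: "nxt m j < m" using J by auto
  obtain P where P: "P \<in> T" "sf T (\<Sum>i\<in>J. v i) = (\<Sum>i\<in>J. v i) \<bullet> P" using sf_attained[OF cT neT] by blast
  have le: "v i \<bullet> P \<le> sf T (v i)" for i using sf_ge[OF cT P(1)] .
  have eq: "sf T (\<Sum>i\<in>J. v i) = (\<Sum>i\<in>J. v i \<bullet> P)" using P(2) by (simp add: inner_sum_left)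
  show ?thesis unfolding v_def[symmetric]
  proof (rule ccontr)
    assume "\<not> sf T (\<Sum>i\<in>J. v i) < (\<Sum>i\<in>J. sf T (v i))"
    then have "(\<Sum>i\<in>J. sf T (v i) - v i \<bullet> P) \<le> 0" using eq by (simp add: sum_subtractf)
    moreover have "(\<Sum>i\<in>J. sf T (v i) - v i \<bullet> P) \<ge> 0" using le by (simp add: sum_nonneg)
    ultimately have s0: "(\<Sum>i\<in>J. sf T (v i) - v i \<bullet> P) = 0" by linarith
    have nn: "\<And>i. i \<in> J \<Longrightarrow> 0 \<le> sf T (v i) - v i \<bullet> P" using le by simp
    have z0: "\<forall>i\<in>J. sf T (v i) - v i \<bullet> P = 0"
      using iffD1[OF sum_nonneg_eq_0_iff[OF fJ nn] s0] .
    then have z: "\<forall>i\<in>J. sf T (v i) = v i \<bullet> P" by simp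
    have Pj: "P = p j"
    proof -
      have h: "p j \<in> T" "v j \<in> normal_cone T (p j)" "v j \<noteq> 0" using traj_facts(2)[OF tr m jm] unfolding v_def by auto
      show ?thesis using unique_max[OF sc cT P(1) h(1) h(3)] z J(2) sf_normal[OF cT h(1,2)] by simp
    qed
    have Pn: "P = p (nxt m j)"
    proof -
      have h: "p (nxt m j) \<in> T" "v (nxt m j) \<in> normal_cone T (p (nxt m j))" "v (nxt m j) \<noteq> 0"
        using traj_facts(2)[OF tr m njm] unfolding v_def by auto
      show ?thesis using unique_max[OF sc cT P(1) h(1) h(3)] z J(3) sf_normal[OF cT h(1,2)] by simp
    qed
    show False using p_neq[OF tr m jm] Pj Pn by simp
  qed
qed

lemma tele:
  fixes q :: "pt list"
  assumes m: "m = length q" "m \<ge> 2" and ik: "i \<le> k" "k \<le> m"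
  shows "(\<Sum>j\<in>{i..<k}. q ! nxt m j - q ! j) = q ! (k mod m) - q ! (i mod m)"
proof -
  define Qn where "Qn j = q ! (j mod m)" for j
  have "(\<Sum>j\<in>{i..<k}. q ! nxt m j - q ! j) = (\<Sum>j\<in>{i..<k}. Qn (Suc j) - Qn j)"
  proof (rule sum.cong)
    fix j assume "j \<in> {i..<k}"
    then have "j < m" using ik by auto
    then show "q ! nxt m j - q ! j = Qn (Suc j) - Qn j" unfolding Qn_def nxt_def by simp
  qed simp
  also have "\<dots> = Qn k - Qn i" by (rule sum_Suc_diff'[OF ik(1)])
  finally show ?thesis unfolding Qn_def .
qed

lemma chain_strict:
  assumes tr: "billiard_traj_with K T q p" and m: "m = length q" and m4: "m \<ge> 4"
    and ii: "i1 < i2" "i2 \<le> i3" "i3 < m"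
  shows "Phi T (q ! i1) (q ! i2) (q ! i3) < ellT T q"
proof -
  define v where "v i = q ! nxt m i - q ! i" for i
  have m2: "m \<ge> 2" using m4 by simp
  define J1 where "J1 = {i1..<i2}"
  define J2 where "J2 = {i2..<i3}"
  define J3 where "J3 = {i3..<m} \<union> {0..<i1}"
  have e1: "q ! i2 - q ! i1 = (\<Sum>j\<in>J1. v j)" unfolding J1_def v_def using tele[OF m m2, of i1 i2] ii by simp
  have e2: "q ! i3 - q ! i2 = (\<Sum>j\<in>J2. v j)" unfolding J2_def v_def using tele[OF m m2, of i2 i3] ii by simp
  have e3: "q ! i1 - q ! i3 = (\<Sum>j\<in>J3. v j)"
  proof -
    have d: "{i3..<m} \<inter> {0..<i1} = {}" using ii by auto
    have "(\<Sum>j\<in>J3. v j) = (\<Sum>j\<in>{i3..<m}. v j) + (\<Sum>j\<in>{0..<i1}. v j)"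
      unfolding J3_def by (rule sum.union_disjoint) (use d in auto)
    also have "\<dots> = (q ! (m mod m) - q ! (i3 mod m)) + (q ! (i1 mod m) - q ! (0 mod m))"
      unfolding v_def using tele[OF m m2, of i3 m] tele[OF m m2, of 0 i1] ii by simp
    also have "\<dots> = q ! i1 - q ! i3" using ii by simp
    finally show ?thesis by simp
  qed
  have part: "{..<m} = J1 \<union> J2 \<union> J3" unfolding J1_def J2_def J3_def using ii by auto
  have dis: "J1 \<inter> J2 = {}" "(J1 \<union> J2) \<inter> J3 = {}" unfolding J1_def J2_def J3_def using ii by auto
  have fin: "finite J1" "finite J2" "finite J3" unfolding J1_def J2_def J3_def by auto
  have tot: "ellT T q = (\<Sum>j\<in>J1. sf T (v j)) + (\<Sum>j\<in>J2. sf T (v j)) + (\<Sum>j\<in>J3. sf T (v j))"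
    unfolding ellT_formula[OF tr m] v_def[symmetric] part
    using dis fin by (simp add: sum.union_disjoint)
  have Phi_eq: "Phi T (q ! i1) (q ! i2) (q ! i3) = sf T (\<Sum>j\<in>J1. v j) + sf T (\<Sum>j\<in>J2. v j) + sf T (\<Sum>j\<in>J3. v j)"
    unfolding Phi_def e1 e2 e3 ..
  have le1: "sf T (\<Sum>j\<in>J1. v j) \<le> (\<Sum>j\<in>J1. sf T (v j))" using sf_sum[OF cT neT fin(1)] .
  have le2: "sf T (\<Sum>j\<in>J2. v j) \<le> (\<Sum>j\<in>J2. sf T (v j))" using sf_sum[OF cT neT fin(2)] .
  have le3: "sf T (\<Sum>j\<in>J3. v j) \<le> (\<Sum>j\<in>J3. sf T (v j))" using sf_sum[OF cT neT fin(3)] .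
  have sub: "J1 \<subseteq> {..<m}" "J2 \<subseteq> {..<m}" "J3 \<subseteq> {..<m}" using part by auto
  have st1: "sf T (\<Sum>j\<in>J1. v j) < (\<Sum>j\<in>J1. sf T (v j))" if "i2 - i1 \<ge> 2"
    using strict_part[OF tr m sub(1), of i1] that ii nxt_small[of i1 m] unfolding J1_def v_def by auto
  have st2: "sf T (\<Sum>j\<in>J2. v j) < (\<Sum>j\<in>J2. sf T (v j))" if "i3 - i2 \<ge> 2"
    using strict_part[OF tr m sub(2), of i2] that ii nxt_small[of i2 m] unfolding J2_def v_def by auto
  have st3: "sf T (\<Sum>j\<in>J3. v j) < (\<Sum>j\<in>J3. sf T (v j))" if "m - i3 \<ge> 2 \<or> i1 \<ge> 2 \<or> (m - i3 = 1 \<and> i1 = 1)"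
    using that
  proof (elim disjE)
    assume "m - i3 \<ge> 2"
    then show ?thesis using strict_part[OF tr m sub(3), of i3] ii nxt_small[of i3 m] unfolding J3_def v_def by auto
  next
    assume "i1 \<ge> 2"
    then show ?thesis using strict_part[OF tr m sub(3), of 0] ii nxt_small[of 0 m] m2 unfolding J3_def v_def by auto
  next
    assume h: "m - i3 = 1 \<and> i1 = 1"
    then have "m - 1 \<in> J3" "0 \<in> J3" unfolding J3_def using ii by auto
    then show ?thesis using strict_part[OF tr m sub(3), of "m - 1"] nxt_last[of m] m2 unfolding v_def by auto
  qed
  have "i2 - i1 \<ge> 2 \<or> i3 - i2 \<ge> 2 \<or> (m - i3 \<ge> 2 \<or> i1 \<ge> 2 \<or> (m - i3 = 1 \<and> i1 = 1))"
    using ii m4 by linarith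
  then show ?thesis unfolding tot Phi_eq using le1 le2 le3 st1 st2 st3 by (elim disjE) linarith+
qed

end



context setting
begin

lemma le3:
  assumes tr: "billiard_traj_with K T q p" and mt: "minimizing_traj K T q" and m: "m = length q"
  shows "m \<le> 3"
proof (rule ccontr)
  assume "\<not> m \<le> 3"
  then have m4: "m \<ge> 4" by simp
  have m2: "m \<ge> 2" using m4 by simp
  define nrm where "nrm i = p (prv m i) - p i" for i
  have nK: "nrm i \<in> normal_cone K (q ! i)" "nrm i \<noteq> 0" if "i < m" for i
    using normals_facts[OF tr m that] unfolding nrm_def by auto
  have s0: "(\<Sum>i<m. nrm i) = 0" using sum_normals[OF tr m] unfolding nrm_def .
  have "(\<Sum>i<m. (1 / real m) *\<^sub>R nrm i) \<in> convex hull (nrm ` {..<m})"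
    by (rule convex_sum) (use m4 in \<open>auto intro: hull_inc\<close>)
  moreover have "(\<Sum>i<m. (1 / real m) *\<^sub>R nrm i) = 0" using s0 by (simp add: scaleR_sum_right[symmetric])
  ultimately have "0 \<in> convex hull (nrm ` {..<m})" by simp
  then obtain S where S: "finite S" "S \<subseteq> nrm ` {..<m}" "card S \<le> DIM(pt) + 1" "0 \<in> convex hull S"
    using caratheodory by blast
  have cS: "card S \<le> 3" using S(3) by simp
  obtain I where I: "I \<subseteq> {..<m}" "inj_on nrm I" "S = nrm ` I" using S(2) subset_image_inj by metis
  have fI: "finite I" using I(1) finite_subset by blast
  have cI: "card I \<le> 3" using cS I card_image by metis
  obtain u where u: "\<forall>x\<in>S. 0 \<le> u x" "sum u S = 1" "(\<Sum>x\<in>S. u x *\<^sub>R x) = 0"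
    using S(4) convex_hull_finite[OF S(1)] by auto
  define d where "d i = u (nrm i)" for i
  have d0: "\<And>i. i \<in> I \<Longrightarrow> 0 \<le> d i" using u(1) I(3) unfolding d_def by auto
  have d1: "(\<Sum>i\<in>I. d i) = 1" using u(2) unfolding I(3) sum.reindex[OF I(2)] d_def by simp
  have d2: "(\<Sum>i\<in>I. d i *\<^sub>R nrm i) = 0" using u(3) unfolding I(3) sum.reindex[OF I(2)] d_def by simp
  have neI: "I \<noteq> {}" using d1 by auto
  define i1 where "i1 = Min I"
  define i3 where "i3 = Max I"
  have i1I: "i1 \<in> I" and i3I: "i3 \<in> I" unfolding i1_def i3_def using fI neI by auto
  have i1le: "\<And>i. i \<in> I \<Longrightarrow> i1 \<le> i" and i3ge: "\<And>i. i \<in> I \<Longrightarrow> i \<le> i3"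
    unfolding i1_def i3_def using fI by auto
  have i13: "i1 < i3"
  proof (rule ccontr)
    assume "\<not> i1 < i3"
    then have "I = {i1}" using i1le i3ge i1I by fastforce
    then have "d i1 = 1" "d i1 *\<^sub>R nrm i1 = 0" using d1 d2 by auto
    then show False using nK(2)[of i1] i1I I(1) by auto
  qed
  define J where "J = I - {i1, i3}"
  have fJ: "finite J" unfolding J_def using fI by simp
  have cJ: "card J \<le> 1"
  proof -
    have "card J = card I - card {i1, i3}" unfolding J_def using fI i1I i3I by (simp add: card_Diff_subset)
    then show ?thesis using cI i13 by simp
  qed
  obtain i2 where i2: "i2 \<in> I" "i1 < i2" "i2 \<le> i3" "I \<subseteq> {i1, i2, i3}"
  proof (cases "J = {}")
    case True
    then have "I \<subseteq> {i1, i3, i3}" unfolding J_def by auto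
    then show ?thesis using that[of i3] i3I i13 by auto
  next
    case False
    then obtain j where j: "j \<in> J" by blast
    have "\<forall>a\<in>J. \<forall>b\<in>J. a = b" using cJ card_le_Suc0_iff_eq[OF fJ] by simp
    then have "J = {j}" using j by blast
    then have "I \<subseteq> {i1, j, i3}" unfolding J_def by auto
    moreover have "j \<in> I" "i1 < j" "j \<le> i3" using j i1le i3ge unfolding J_def by fastforce+
    ultimately show ?thesis using that by blast
  qed
  have i3m: "i3 < m" using i3I I(1) by auto
  have Ieq: "I = {i1, i2, i3}" using i2 i1I i3I by auto
  define n1 where "n1 = d i1 *\<^sub>R nrm i1"
  define n2 where "n2 = (if i2 = i3 then 0 else d i2 *\<^sub>R nrm i2)"
  define n3 where "n3 = d i3 *\<^sub>R nrm i3"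
  have sumn: "n1 + n2 + n3 = 0"
  proof (cases "i2 = i3")
    case True
    then have "I = {i1, i3}" using Ieq by simp
    then show ?thesis using d2 i13 True unfolding n1_def n2_def n3_def by simp
  next
    case False
    then show ?thesis using d2 Ieq i2 i13 unfolding n1_def n2_def n3_def by (simp add: algebra_simps)
  qed
  have nn: "n1 \<noteq> 0 \<or> n2 \<noteq> 0 \<or> n3 \<noteq> 0"
  proof (rule ccontr)
    assume z: "\<not> (n1 \<noteq> 0 \<or> n2 \<noteq> 0 \<or> n3 \<noteq> 0)"
    have "d i = 0" if "i \<in> I" for i
    proof -
      have im: "i < m" using that I(1) by auto
      have "i = i1 \<or> (i = i2 \<and> i2 \<noteq> i3) \<or> i = i3" using that Ieq by auto
      then have "d i *\<^sub>R nrm i = 0" using z unfolding n1_def n2_def n3_def by auto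
      then show ?thesis using nK(2)[OF im] by simp
    qed
    then show False using d1 by simp
  qed
  have inK: "q ! i \<in> K" if "i < m" for i using traj_facts(4)[OF tr m that] by simp
  have ims: "i1 < m" "i2 < m" using i13 i2 i3m by auto
  have F: "F3 K (q ! i1) (q ! i2) (q ! i3)"
    unfolding F3_def
  proof (intro conjI exI)
    show "q ! i1 \<in> K" "q ! i2 \<in> K" "q ! i3 \<in> K" using inK ims i3m by auto
    show "n1 \<in> normal_cone K (q ! i1)" unfolding n1_def using normal_cone_scale nK(1) ims d0 i1I by blast
    show "n2 \<in> normal_cone K (q ! i2)" unfolding n2_def using normal_cone_scale nK(1) ims d0 i2(1) normal_cone_zero by auto
    show "n3 \<in> normal_cone K (q ! i3)" unfolding n3_def using normal_cone_scale nK(1) i3m d0 i3I by blast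
    show "n1 + n2 + n3 = 0" by (rule sumn)
    show "n1 \<noteq> 0 \<or> n2 \<noteq> 0 \<or> n3 \<noteq> 0" by (rule nn)
  qed
  have "Phi T (q ! i1) (q ! i2) (q ! i3) < ellT T q" using chain_strict[OF tr m m4 i2(2,3) i3m] .
  then show False using shorter_contra[OF mt F] by blast
qed

end



context setting
begin

lemma tr3_Phi_eq:
  assumes tr: "tr3 K T a b c x y z" shows "Phi T a b c = Bf a b c x y z"
proof -
  have h: "x \<in> T" "y \<in> T" "z \<in> T" "b - a \<in> normal_cone T x" "c - b \<in> normal_cone T y" "a - c \<in> normal_cone T z"
    using tr unfolding tr3_def by auto
  show ?thesis unfolding Phi_def Bf_def
    using sf_normal[OF cT h(1,4)] sf_normal[OF cT h(2,5)] sf_normal[OF cT h(3,6)] by simp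
qed

lemma PERT:
  assumes tr: "tr3 K T a b c x y z" and dist: "a \<noteq> b" "b \<noteq> c" "c \<noteq> a"
    and d: "d \<in> normal_cone K a" "d \<noteq> 0" and ab: "\<alpha> \<ge> 0" "\<beta> \<ge> 0"
    and sm0: "d + \<alpha> *\<^sub>R (x - y) + \<beta> *\<^sub>R (y - z) = 0"
    and np: "\<forall>k. z - x \<noteq> k *\<^sub>R d"
  shows "\<exists>a' b' c'. F3 K a' b' c' \<and> Phi T a' b' c' < Phi T a b c"
proof -
  have h: "a \<in> K" "b \<in> K" "c \<in> K" "x \<in> T" "y \<in> T" "z \<in> T"
     "b - a \<in> normal_cone T x" "c - b \<in> normal_cone T y" "a - c \<in> normal_cone T z"
     "z - x \<in> normal_cone K a" "x - y \<in> normal_cone K b" "y - z \<in> normal_cone K c"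
    using tr unfolding tr3_def by auto
  have s: "(- (\<alpha> *\<^sub>R (x - y))) + (- (\<beta> *\<^sub>R (y - z))) + (- d) = 0"
  proof -
    have "(- (\<alpha> *\<^sub>R (x - y))) + (- (\<beta> *\<^sub>R (y - z))) + (- d) = - (d + \<alpha> *\<^sub>R (x - y) + \<beta> *\<^sub>R (y - z))"
      by (simp add: algebra_simps)
    then show ?thesis using sm0 by simp
  qed
  have nz: "- (\<alpha> *\<^sub>R (x - y)) \<noteq> 0 \<or> - (\<beta> *\<^sub>R (y - z)) \<noteq> 0 \<or> - d \<noteq> 0" using d(2) by simp
  obtain k x' y' z' where k: "k > 0" "y' - x' = k *\<^sub>R (- (\<alpha> *\<^sub>R (x - y)))"
    "z' - y' = k *\<^sub>R (- (\<beta> *\<^sub>R (y - z)))" "x' - z' = k *\<^sub>R (- d)" "F3 T x' y' z'"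
    using gen3[OF T s nz] by blast
  have e1: "z' - x' = k *\<^sub>R d" using flip_eq[OF k(4)] .
  have e2: "x' - y' = k *\<^sub>R (\<alpha> *\<^sub>R (x - y))" using flip_eq[OF k(2)] .
  have e3: "y' - z' = k *\<^sub>R (\<beta> *\<^sub>R (y - z))" using flip_eq[OF k(3)] .
  have x'T: "x' \<in> T" "y' \<in> T" "z' \<in> T" using k(5) unfolding F3_def by auto
  have nb: "\<alpha> *\<^sub>R (x - y) \<in> normal_cone K b" using normal_cone_scale[OF h(11) ab(1)] .
  have nc: "\<beta> *\<^sub>R (y - z) \<in> normal_cone K c" using normal_cone_scale[OF h(12) ab(2)] .
  have psi: "Psi K x' y' z' = Bf a b c x' y' z'"
  proof -
    define nb' where "nb' = \<alpha> *\<^sub>R (x - y)"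
    define nc' where "nc' = \<beta> *\<^sub>R (y - z)"
    have e2': "x' - y' = k *\<^sub>R nb'" and e3': "y' - z' = k *\<^sub>R nc'" using e2 e3 unfolding nb'_def nc'_def by auto
    have s1: "sf K (k *\<^sub>R d) = k * (d \<bullet> a)" using sf_scale[OF cK neK, of k d] sf_normal[OF cK h(1) d(1)] k(1) by simp
    have s2: "sf K (k *\<^sub>R nb') = k * (nb' \<bullet> b)" using sf_scale[OF cK neK, of k nb'] sf_normal[OF cK h(2) nb[folded nb'_def]] k(1) by simp
    have s3: "sf K (k *\<^sub>R nc') = k * (nc' \<bullet> c)" using sf_scale[OF cK neK, of k nc'] sf_normal[OF cK h(3) nc[folded nc'_def]] k(1) by simp
    show ?thesis unfolding Psi_def Bf_alt e1 e2' e3' s1 s2 s3 by (simp add: inner_commute)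
  qed
  have lt: "Bf a b c x' y' z' < Phi T a b c"
  proof -
    have t1: "(b - a) \<bullet> x' \<le> sf T (b - a)" "(c - b) \<bullet> y' \<le> sf T (c - b)" "(a - c) \<bullet> z' \<le> sf T (a - c)"
      using sf_ge[OF cT] x'T by auto
    have ne: "b - a \<noteq> 0" "c - b \<noteq> 0" "a - c \<noteq> 0" using dist by auto
    have mx: "sf T (b - a) = (b - a) \<bullet> x" "sf T (c - b) = (c - b) \<bullet> y" "sf T (a - c) = (a - c) \<bullet> z"
      using sf_normal[OF cT] h by auto
    show ?thesis
    proof (rule ccontr)
      assume "\<not> Bf a b c x' y' z' < Phi T a b c"
      then have "(b - a) \<bullet> x' = sf T (b - a)" "(c - b) \<bullet> y' = sf T (c - b)" "(a - c) \<bullet> z' = sf T (a - c)"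
        using t1 unfolding Bf_def Phi_def by linarith+
      then have "x' = x" "z' = z"
        using unique_max[OF sc cT x'T(1) h(4) ne(1)] unique_max[OF sc cT x'T(3) h(6) ne(3)] mx by auto
      then have "z - x = k *\<^sub>R d" using e1 by simp
      then show False using np by blast
    qed
  qed
  obtain a' b' c' where r: "F3 K a' b' c'" "Phi T a' b' c' = Bf a' b' c' x' y' z'" using D2[OF K T k(5)] by blast
  have "a' \<in> K" "b' \<in> K" "c' \<in> K" using r(1) unfolding F3_def by auto
  then have "Bf a' b' c' x' y' z' \<le> Psi K x' y' z'" using Bf_le_Psi[OF cK] by blast
  then show ?thesis using r psi lt by (intro exI[of _ a'] exI[of _ b'] exI[of _ c']) simp
qed

lemma nonsmooth_w:
  assumes a: "a \<in> frontier K" and ns: "\<not> smooth_point K a" and n: "n \<in> normal_cone K a" "n \<noteq> 0"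
  shows "\<exists>w\<in>normal_cone K a. \<forall>c. w \<noteq> c *\<^sub>R n"
proof -
  define H0 where "H0 = {v. n \<bullet> v = n \<bullet> a}"
  have sh0: "supporting_hyperplane K a H0" unfolding supporting_hyperplane_def H0_def using n
    by (intro exI[of _ n] exI[of _ "n \<bullet> a"]) (auto simp: normal_cone_def inner_diff_right)
  have "\<not> (\<exists>!H. supporting_hyperplane K a H)" using ns a unfolding smooth_point_def by blast
  then obtain H where H: "supporting_hyperplane K a H" "H \<noteq> H0" using sh0 by blast
  then obtain w bb where w: "w \<noteq> 0" "H = {v. w \<bullet> v = bb}" "a \<in> H" "\<forall>v\<in>K. w \<bullet> v \<le> bb"
    unfolding supporting_hyperplane_def by blast
  have bb: "bb = w \<bullet> a" using w(2,3) by simp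
  have wN: "w \<in> normal_cone K a" unfolding normal_cone_def using w(4) bb by (auto simp: inner_diff_right)
  have "\<forall>c. w \<noteq> c *\<^sub>R n"
  proof (intro allI notI)
    fix c assume wc: "w = c *\<^sub>R n"
    then have c0: "c \<noteq> 0" using w(1) by auto
    have "H = {v. c * (n \<bullet> v) = c * (n \<bullet> a)}" using w(2) bb wc by simp
    also have "\<dots> = H0" unfolding H0_def using c0 by simp
    finally show False using H(2) by simp
  qed
  then show ?thesis using wN by blast
qed

lemma corner:
  assumes tr: "tr3 K T a b c x y z" and dist: "a \<noteq> b" "b \<noteq> c" "c \<noteq> a"
    and pd: "x \<noteq> y" "y \<noteq> z" "z \<noteq> x" and fT: "x \<in> frontier T" "y \<in> frontier T" "z \<in> frontier T"
    and fa: "a \<in> frontier K" and ns: "\<not> smooth_point K a"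
  shows "\<exists>a' b' c'. F3 K a' b' c' \<and> Phi T a' b' c' < Phi T a b c"
proof -
  define na where "na = z - x"
  define nb where "nb = x - y"
  define nc where "nc = y - z"
  have naK: "na \<in> normal_cone K a" using tr unfolding tr3_def na_def by auto
  have na0: "na \<noteq> 0" using pd unfolding na_def by auto
  have sumn: "na + nb + nc = 0" unfolding na_def nb_def nc_def by simp
  have D: "det2 nb nc \<noteq> 0" using no_three_collinear[OF fT pd] unfolding nb_def nc_def by blast
  obtain w where w: "w \<in> normal_cone K a" "\<forall>c. w \<noteq> c *\<^sub>R na" using nonsmooth_w[OF fa ns naK na0] by blast
  define s where "s = det2 w nc / det2 nb nc"
  define t where "t = det2 nb w / det2 nb nc"
  have wst: "w = s *\<^sub>R nb + t *\<^sub>R nc" unfolding s_def t_def using det_span[OF D] .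
  define e where "e = 1 / (2 * (\<bar>s\<bar> + \<bar>t\<bar> + 1))"
  have epos: "e > 0" unfolding e_def by (simp add: add_pos_nonneg)
  have es: "e * \<bar>s\<bar> < 1" "e * \<bar>t\<bar> < 1" unfolding e_def by (simp_all add: field_simps)
  define d where "d = na + e *\<^sub>R w"
  define \<alpha> where "\<alpha> = 1 - e * s"
  define \<beta> where "\<beta> = 1 - e * t"
  have ab: "\<alpha> \<ge> 0" "\<beta> \<ge> 0" unfolding \<alpha>_def \<beta>_def using es
    by (smt (verit) abs_ge_self mult_left_mono epos)+
  have dK: "d \<in> normal_cone K a" unfolding d_def using normal_cone_add[OF naK normal_cone_scale[OF w(1)]] epos by simp
  have sm0: "d + \<alpha> *\<^sub>R (x - y) + \<beta> *\<^sub>R (y - z) = 0"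
  proof -
    have "d + \<alpha> *\<^sub>R nb + \<beta> *\<^sub>R nc = (na + nb + nc) + e *\<^sub>R (w - (s *\<^sub>R nb + t *\<^sub>R nc))"
      unfolding d_def \<alpha>_def \<beta>_def by (simp add: algebra_simps)
    also have "\<dots> = 0" using sumn wst by simp
    finally show ?thesis unfolding nb_def nc_def .
  qed
  have d0: "d \<noteq> 0"
  proof
    assume d00: "d = 0"
    have "e *\<^sub>R w = d - na" unfolding d_def by simp
    then have ew: "e *\<^sub>R w = - na" using d00 by simp
    have "w = (1 / e) *\<^sub>R (e *\<^sub>R w)" using epos by simp
    also have "\<dots> = (- 1 / e) *\<^sub>R na" unfolding ew by simp
    finally show False using w(2) by blast
  qed
  have np: "\<forall>k. z - x \<noteq> k *\<^sub>R d"
  proof (intro allI notI)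
    fix k assume "z - x = k *\<^sub>R d"
    then have eq: "na = k *\<^sub>R na + (k * e) *\<^sub>R w" unfolding na_def[symmetric] d_def by (simp add: algebra_simps)
    show False
    proof (cases "k = 0")
      case True then show False using eq na0 by simp
    next
      case False
      have kew: "(k * e) *\<^sub>R w = (1 - k) *\<^sub>R na" using eq by (simp add: algebra_simps)
      have "k * e \<noteq> 0" using False epos by simp
      then have "w = (1 / (k * e)) *\<^sub>R ((k * e) *\<^sub>R w)" by simp
      also have "\<dots> = ((1 - k) / (k * e)) *\<^sub>R na" unfolding kew by simp
      finally show False using w(2) by blast
    qed
  qed
  show ?thesis by (rule PERT[OF tr dist dK d0 ab sm0 np])
qed

end



lemma len3: "length q = 3 \<Longrightarrow> \<exists>a b c. q = [a, b, c]"
  by (auto simp: numeral_3_eq_3 length_Suc_conv)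

lemma len2: "length q = 2 \<Longrightarrow> \<exists>a b. q = [a, b]"
  by (auto simp: numeral_2_eq_2 length_Suc_conv)

lemma det2_scale2: "det2 (a *\<^sub>R u) (b *\<^sub>R v) = a * b * det2 u v"
  unfolding det2_def by (simp add: algebra_simps)

context setting
begin

lemma traj3_facts:
  assumes tr: "billiard_traj_with K T [a, b, c] p"
  shows "tr3 K T a b c (p 0) (p 1) (p 2)" "a \<noteq> b" "b \<noteq> c" "c \<noteq> a"
    "a \<notin> closed_segment c b" "b \<notin> closed_segment a c" "c \<notin> closed_segment b a"
    "p 0 \<noteq> p 1" "p 1 \<noteq> p 2" "p 2 \<noteq> p 0"
    "p 0 \<in> frontier T" "p 1 \<in> frontier T" "p 2 \<in> frontier T"
    "a \<in> frontier K" "b \<in> frontier K" "c \<in> frontier K"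
    "ellT T [a, b, c] = Phi T a b c"
proof -
  have len: "length [a, b, c] = 3" by simp
  have h: "a \<noteq> b" "b \<noteq> c" "c \<noteq> a"
    "a \<notin> closed_segment c b" "b \<notin> closed_segment a c" "c \<notin> closed_segment b a"
    "a \<in> frontier K" "b \<in> frontier K" "c \<in> frontier K"
    "p 0 \<in> frontier T" "p 1 \<in> frontier T" "p 2 \<in> frontier T"
    "b - a \<in> normal_cone T (p 0)" "c - b \<in> normal_cone T (p 1)" "a - c \<in> normal_cone T (p 2)"
    "p 1 - p 0 \<in> uminus ` normal_cone K b" "p 2 - p 1 \<in> uminus ` normal_cone K c"
    "p 0 - p 2 \<in> uminus ` normal_cone K a"
    using tr unfolding billiard_traj_with_def closed_polygon_def len all3
    by (simp_all add: nxt_def prv_def numeral_2_eq_2)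
  have nK: "p 0 - p 1 \<in> normal_cone K b" "p 1 - p 2 \<in> normal_cone K c" "p 2 - p 0 \<in> normal_cone K a"
    using h(16-18) by (metis (no_types, lifting) image_iff minus_diff_eq minus_minus)+
  have inK: "a \<in> K" "b \<in> K" "c \<in> K" using h(7-9) cb_frontier[OF K] by auto
  have inT: "p 0 \<in> T" "p 1 \<in> T" "p 2 \<in> T" using h(10-12) cb_frontier[OF T] by auto
  show "tr3 K T a b c (p 0) (p 1) (p 2)" unfolding tr3_def using inK inT h(13-15) nK by auto
  show "a \<noteq> b" "b \<noteq> c" "c \<noteq> a"
    "a \<notin> closed_segment c b" "b \<notin> closed_segment a c" "c \<notin> closed_segment b a" using h by auto
  have m: "3 = length [a, b, c]" by simp
  show "p 0 \<noteq> p 1" using p_neq[OF tr m, of 0] by (simp add: nxt_def)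
  show "p 1 \<noteq> p 2" using p_neq[OF tr m, of 1] by (simp add: nxt_def numeral_2_eq_2)
  show "p 2 \<noteq> p 0" using p_neq[OF tr m, of 2] by (simp add: nxt_def numeral_2_eq_2)
  show "p 0 \<in> frontier T" "p 1 \<in> frontier T" "p 2 \<in> frontier T"
    "a \<in> frontier K" "b \<in> frontier K" "c \<in> frontier K" using h by auto
  show "ellT T [a, b, c] = Phi T a b c" unfolding ellT3 Phi_def mu_polar_sf[OF T] ..
qed

lemma smooth3:
  assumes tr: "billiard_traj_with K T q p" and mt: "minimizing_traj K T q" and m3: "length q = 3"
  shows "\<forall>z\<in>set q. smooth_point K z"
proof -
  obtain a b c where q: "q = [a, b, c]" using len3[OF m3] by blast
  note f = traj3_facts[OF tr[unfolded q]]
  have L: "ellT T q = Phi T a b c" using f(17) q by simp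
  have sa: "smooth_point K a"
  proof (rule ccontr)
    assume "\<not> smooth_point K a"
    then obtain a' b' c' where "F3 K a' b' c'" "Phi T a' b' c' < Phi T a b c"
      using corner[OF f(1-4) f(8-10) f(11-13) f(14)] by blast
    then show False using shorter_contra[OF mt] L by auto
  qed
  have sb: "smooth_point K b"
  proof (rule ccontr)
    assume "\<not> smooth_point K b"
    then obtain a' b' c' where "F3 K a' b' c'" "Phi T a' b' c' < Phi T b c a"
      using corner[OF tr3_rot[OF f(1)] f(3) f(4) f(2) f(9) f(10) f(8) f(12) f(13) f(11) f(15)] by blast
    moreover have "Phi T b c a = Phi T a b c" by (rule Phi_rot)
    ultimately show False using shorter_contra[OF mt] L by auto
  qed
  have sc': "smooth_point K c"
  proof (rule ccontr)
    assume "\<not> smooth_point K c"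
    then obtain a' b' c' where "F3 K a' b' c'" "Phi T a' b' c' < Phi T c a b"
      using corner[OF tr3_rot[OF tr3_rot[OF f(1)]] f(4) f(2) f(3) f(10) f(8) f(9) f(13) f(11) f(12) f(16)] by blast
    moreover have "Phi T c a b = Phi T a b c" using Phi_rot[of T b c a] Phi_rot[of T a b c] by simp
    ultimately show False using shorter_contra[OF mt] L by auto
  qed
  show ?thesis using sa sb sc' q by auto
qed

end



lemma cone_line:
  fixes n0 :: pt assumes "n0 \<noteq> 0"
  shows "subspace (convex_cone hull {n0, - n0}) \<and> dim (convex_cone hull {n0, - n0}) = 1"
proof -
  define L where "L = range (\<lambda>t. t *\<^sub>R n0)"
  have cL: "convex_cone L" unfolding convex_cone_iff L_def
  proof (intro conjI ballI allI impI)
    show "0 \<in> range (\<lambda>t. t *\<^sub>R n0)" by (rule image_eqI[of _ _ 0]) auto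
    fix x y assume "x \<in> range (\<lambda>t. t *\<^sub>R n0)" "y \<in> range (\<lambda>t. t *\<^sub>R n0)"
    then obtain s t where "x = s *\<^sub>R n0" "y = t *\<^sub>R n0" by auto
    then show "x + y \<in> range (\<lambda>t. t *\<^sub>R n0)" by (intro image_eqI[of _ _ "s + t"]) (auto simp: scaleR_add_left)
  next
    fix x c assume "x \<in> range (\<lambda>t. t *\<^sub>R n0)" "(0::real) \<le> c"
    then obtain s where "x = s *\<^sub>R n0" by auto
    then show "c *\<^sub>R x \<in> range (\<lambda>t. t *\<^sub>R n0)" by (intro image_eqI[of _ _ "c * s"]) auto
  qed
  have sub: "{n0, - n0} \<subseteq> L" unfolding L_def
    by (auto intro: image_eqI[of _ _ 1] image_eqI[of _ _ "-1"])
  have h1: "convex_cone hull {n0, - n0} \<subseteq> L" using hull_minimal[of _ _ convex_cone, OF sub cL] .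

  have h2: "L \<subseteq> convex_cone hull {n0, - n0}"
  proof
    fix x assume "x \<in> L"
    then obtain t where t: "x = t *\<^sub>R n0" unfolding L_def by auto
    have cc: "convex_cone (convex_cone hull {n0, - n0})" by (rule convex_cone_convex_cone_hull)
    have i1: "n0 \<in> convex_cone hull {n0, - n0}" and i2: "- n0 \<in> convex_cone hull {n0, - n0}"
      by (auto intro: hull_inc)
    show "x \<in> convex_cone hull {n0, - n0}"
    proof (cases "t \<ge> 0")
      case True then show ?thesis using convex_cone_scaleR[OF cc True i1] t by simp
    next
      case False
      then have "- t \<ge> 0" by simp
      from convex_cone_scaleR[OF cc this i2] show ?thesis using t by simp
    qed
  qed
  have eq: "convex_cone hull {n0, - n0} = span {n0}" using h1 h2 unfolding L_def span_singleton by auto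
  show ?thesis unfolding eq using assms by (simp add: subspace_span)
qed

lemma cone_full:
  fixes n0 n1 n2 :: pt
  assumes D: "det2 n1 n2 \<noteq> 0" and mu: "m0 > 0" "m1 > 0" "m2 > 0"
    and s: "m0 *\<^sub>R n0 + m1 *\<^sub>R n1 + m2 *\<^sub>R n2 = 0"
  shows "convex_cone hull {n0, n1, n2} = UNIV"
proof -
  have cc: "convex_cone (convex_cone hull {n0, n1, n2})" by (rule convex_cone_convex_cone_hull)
  have i: "n0 \<in> convex_cone hull {n0, n1, n2}" "n1 \<in> convex_cone hull {n0, n1, n2}" "n2 \<in> convex_cone hull {n0, n1, n2}"
    by (auto intro: hull_inc)
  have "w \<in> convex_cone hull {n0, n1, n2}" for w
  proof -
    define s where "s = det2 w n2 / det2 n1 n2"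
    define t where "t = det2 n1 w / det2 n1 n2"
    have wst: "w = s *\<^sub>R n1 + t *\<^sub>R n2" unfolding s_def t_def using det_span[OF D] .
    define l where "l = \<bar>s\<bar> / m1 + \<bar>t\<bar> / m2"
    have l0: "l \<ge> 0" unfolding l_def using mu by simp
    have c1: "s + l * m1 \<ge> 0"
    proof -
      have "l * m1 \<ge> \<bar>s\<bar> / m1 * m1" unfolding l_def using mu by (intro mult_right_mono) auto
      then show ?thesis using mu by simp
    qed
    have c2: "t + l * m2 \<ge> 0"
    proof -
      have "l * m2 \<ge> \<bar>t\<bar> / m2 * m2" unfolding l_def using mu by (intro mult_right_mono) auto
      then show ?thesis using mu by simp
    qed
    have c0: "l * m0 \<ge> 0" using l0 mu by simp
    have "w = (l * m0) *\<^sub>R n0 + (s + l * m1) *\<^sub>R n1 + (t + l * m2) *\<^sub>R n2"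
    proof -
      have "(l * m0) *\<^sub>R n0 + (s + l * m1) *\<^sub>R n1 + (t + l * m2) *\<^sub>R n2
          = l *\<^sub>R (m0 *\<^sub>R n0 + m1 *\<^sub>R n1 + m2 *\<^sub>R n2) + (s *\<^sub>R n1 + t *\<^sub>R n2)"
        by (simp add: algebra_simps)
      then show ?thesis using s wst by simp
    qed
    moreover have "(l * m0) *\<^sub>R n0 + (s + l * m1) *\<^sub>R n1 + (t + l * m2) *\<^sub>R n2 \<in> convex_cone hull {n0, n1, n2}"
      by (intro convex_cone_add[OF cc] convex_cone_scaleR[OF cc] c0 c1 c2 i)
    ultimately show ?thesis by simp
  qed
  then show ?thesis by auto
qed

context setting
begin

lemma cone_part:
  assumes tr: "billiard_traj_with K T q p" and rr: "reflection_rule K q p H n mu"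
    and m: "m = length q" and m23: "m = 2 \<or> m = 3"
  shows "subspace (convex_cone hull (n ` {..<m})) \<and> dim (convex_cone hull (n ` {..<m})) = m - 1"
proof -
  have r: "\<And>j. j < m \<Longrightarrow> norm (n j) = 1 \<and> mu j \<ge> 0 \<and> p (nxt m j) - p j = - (mu (nxt m j) *\<^sub>R n (nxt m j))"
    using rr m unfolding reflection_rule_def by auto
  have m2: "m \<ge> 2" using m23 by auto
  have nrm: "p (prv m i) - p i = mu i *\<^sub>R n i" if "i < m" for i
  proof -
    have pi: "prv m i < m" using prv_lt m2 by simp
    have "p i - p (prv m i) = - (mu i *\<^sub>R n i)" using r[OF pi] nxt_prv[OF that] by simp
    then show ?thesis by (metis minus_diff_eq minus_minus)
  qed
  have mupos: "mu i > 0" if "i < m" for i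
  proof -
    have "mu i *\<^sub>R n i \<noteq> 0" using normals_facts(2)[OF tr m that] nrm[OF that] by simp
    then have "mu i \<noteq> 0" by auto
    then show ?thesis using r[OF that] by simp
  qed
  have n1: "norm (n i) = 1" if "i < m" for i using r[OF that] by simp
  have sn: "(\<Sum>i<m. mu i *\<^sub>R n i) = 0" using sum_normals[OF tr m] nrm by simp
  show ?thesis using m23
  proof (elim disjE)
    assume m2': "m = 2"
    have s2: "mu 0 *\<^sub>R n 0 + mu 1 *\<^sub>R n 1 = 0" using sn m2' by (simp add: numeral_2_eq_2)
    have mu0: "mu 0 > 0" and mu1: "mu 1 > 0" using mupos m2' by auto
    have "mu 0 *\<^sub>R n 0 = (mu 0 *\<^sub>R n 0 + mu 1 *\<^sub>R n 1) - mu 1 *\<^sub>R n 1" by simp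
    also have "\<dots> = - (mu 1 *\<^sub>R n 1)" using s2 by simp
    finally have "norm (mu 0 *\<^sub>R n 0) = norm (mu 1 *\<^sub>R n 1)" by simp
    then have "mu 0 = mu 1" using n1 m2' mu0 mu1 by simp
    then have "mu 0 *\<^sub>R (n 0 + n 1) = 0" using s2 by (simp add: scaleR_add_right)
    then have z: "n 0 + n 1 = 0" using mu0 by simp
    have "n 1 = (n 0 + n 1) - n 0" by simp
    also have "\<dots> = - n 0" unfolding z by simp
    finally have "n 1 = - n 0" .
    moreover have "n ` {..<m} = {n 0, n 1}" using m2' by (auto simp: numeral_2_eq_2 lessThan_Suc)
    moreover have "n 0 \<noteq> 0" using n1[of 0] m2' by auto
    ultimately show ?thesis using cone_line[of "n 0"] m2' by simp
  next
    assume m3: "m = 3"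
    obtain a b c where q: "q = [a, b, c]" using len3 m m3 by metis
    note f = traj3_facts[OF tr[unfolded q]]
    have e1: "p 0 - p 1 = mu 1 *\<^sub>R n 1" using nrm[of 1] m3 by (simp add: prv_def)
    have e2: "p 1 - p 2 = mu 2 *\<^sub>R n 2" using nrm[of 2] m3 by (simp add: prv_def)
    have "det2 (p 0 - p 1) (p 1 - p 2) \<noteq> 0"
      using no_three_collinear[OF f(11-13) f(8-10)] by blast
    then have D: "det2 (n 1) (n 2) \<noteq> 0" unfolding e1 e2 det2_scale2 by simp
    have s3: "mu 0 *\<^sub>R n 0 + mu 1 *\<^sub>R n 1 + mu 2 *\<^sub>R n 2 = 0" using sn m3
      by (simp add: numeral_3_eq_3 numeral_2_eq_2 lessThan_Suc add_ac)
    have "n ` {..<m} = {n 0, n 1, n 2}" using m3 by (auto simp: numeral_3_eq_3 numeral_2_eq_2 lessThan_Suc)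
    moreover have "convex_cone hull {n 0, n 1, n 2} = UNIV"
      using cone_full[OF D _ _ _ s3] mupos m3 by auto
    ultimately show ?thesis using m3 by simp
  qed
qed

lemma aff_part:
  assumes tr: "billiard_traj_with K T q p" and m: "m = length q" and m23: "m = 2 \<or> m = 3"
    and V: "minimal_affine_section K q V"
  shows "aff_dim V = int m - 1"
proof -
  have aV: "affine V" and sq: "set q \<subseteq> K \<inter> V"
    and mn: "\<And>W. affine W \<and> set q \<subseteq> K \<inter> W \<longrightarrow> K \<inter> V \<subseteq> K \<inter> W"
    using V unfolding minimal_affine_section_def by auto
  have le2: "aff_dim V \<le> 2" using aff_dim_le_DIM[of V] by simp
  show ?thesis using m23
  proof (elim disjE)
    assume m2: "m = 2"
    obtain a b where q: "q = [a, b]" using len2 m m2 by metis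
    have ab: "a \<noteq> b" using traj_facts(5)[OF tr m, of 0] m2 q by (simp add: nxt_def)
    have "aff_dim {a, b} \<le> aff_dim V" using sq q by (intro aff_dim_subset) auto
    then have ge1: "aff_dim V \<ge> 1" using ab by simp
    have "aff_dim V \<noteq> 2"
    proof
      assume "aff_dim V = 2"
      then have "affine hull V = UNIV" using aff_dim_eq_full[of V] by simp
      moreover have "affine hull V = V" using aV by (rule affine_hull_eq[THEN iffD2])
      ultimately have VU: "V = UNIV" by simp
      define W where "W = affine hull {a, b}"
      have "affine W" unfolding W_def by simp
      moreover have "set q \<subseteq> K \<inter> W" using sq q unfolding W_def by (auto intro: hull_inc)
      ultimately have "K \<subseteq> W" using mn[of W] VU by auto
      then have "aff_dim K \<le> aff_dim W" by (rule aff_dim_subset)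
      also have "\<dots> = 1" unfolding W_def using ab by simp
      finally have "aff_dim K \<le> 1" .
      moreover have "aff_dim K = 2" using aff_dim_nonempty_interior[of K] cb_int[OF K] by auto
      ultimately show False by simp
    qed
    then show ?thesis using ge1 le2 m2 by simp
  next
    assume m3: "m = 3"
    obtain a b c where q: "q = [a, b, c]" using len3 m m3 by metis
    note f = traj3_facts[OF tr[unfolded q]]
    have "\<not> collinear {a, b, c}"
    proof
      assume "collinear {a, b, c}"
      then have "between (b, c) a \<or> between (c, a) b \<or> between (a, b) c" using collinear_between_cases by blast
      then have "a \<in> closed_segment b c \<or> b \<in> closed_segment c a \<or> c \<in> closed_segment a b"
        by (simp add: between_mem_segment)
      then show False using f(5-7) by (auto simp: closed_segment_commute)
    qed
    then have nd: "\<not> affine_dependent {a, b, c}" using collinear_3_eq_affine_dependent by blast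
    have "card {a, b, c} = 3" using f(2-4) by auto
    then have "aff_dim {a, b, c} = 2" using aff_dim_affine_independent[OF nd] by simp
    moreover have "aff_dim {a, b, c} \<le> aff_dim V" using sq q by (intro aff_dim_subset) auto
    ultimately show ?thesis using le2 m3 by simp
  qed
qed

end


theorem corollary1p5:
  fixes K T :: "(real^2) set" and q :: "(real^2) list"
  assumes "convex_body K" and "convex_body T"
    and "strictly_convex T" and "smooth_body T"
    and "minimizing_traj K T q"
  shows "length q \<in> {2, 3}
    \<and> (length q = 3 \<longrightarrow> (\<forall>z\<in>set q. smooth_point K z))
    \<and> (\<forall>p H n mu. billiard_traj_with K T q p \<and> reflection_rule K q p H n mu \<longrightarrow>
         subspace (convex_cone hull (n ` {..<length q})) \<and>
         dim (convex_cone hull (n ` {..<length q})) = length q - 1)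
    \<and> (\<forall>V. minimal_affine_section K q V \<longrightarrow> aff_dim V = int (length q) - 1)"
proof -
  interpret setting K T using assms(1-4) by unfold_locales
  obtain p0 where tr0: "billiard_traj_with K T q p0"
    using assms(5) unfolding minimizing_traj_def billiard_traj_def by blast
  have m23: "length q = 2 \<or> length q = 3"
    using le3[OF tr0 assms(5) refl] traj_facts(1)[OF tr0 refl] by auto
  have A: "length q \<in> {2, 3}" using m23 by auto
  have B: "length q = 3 \<longrightarrow> (\<forall>z\<in>set q. smooth_point K z)" using smooth3[OF tr0 assms(5)] by blast
  have C: "\<forall>p H n mu. billiard_traj_with K T q p \<and> reflection_rule K q p H n mu \<longrightarrow>
         subspace (convex_cone hull (n ` {..<length q})) \<and>
         dim (convex_cone hull (n ` {..<length q})) = length q - 1"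
    using cone_part[OF _ _ refl m23] by blast
  have D: "\<forall>V. minimal_affine_section K q V \<longrightarrow> aff_dim V = int (length q) - 1"
    using aff_part[OF tr0 refl m23] by blast
  show ?thesis using A B C D by blast
qed

end
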